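(* Let $L$ be a linear continuum with endpoints. For tuples $\bar f=(f_1,\dots,f_n)$ and $\bar g=(g_1,\dots,g_n)$ in $M_L$, let $\hat f=\frac{1}{n}\sum_{i=1}^n f_i$ and $\hat g=\frac{1}{n}\sum_{i=1}^n g_i$ (pointwise averages). Then $\mathrm{tp}(\bar f,\bar g)$ is determined by $\mathrm{tp}(\bar f)$, $\mathrm{tp}(\bar g)$ and $\mathrm{tp}(\hat f,\hat g)$: if $\bar f',\bar g'$ are $n$-tuples in $M_L$ with $\mathrm{tp}(\bar f')=\mathrm{tp}(\bar f)$, $\mathrm{tp}(\bar g')=\mathrm{tp}(\bar g)$ and $\mathrm{tp}(\hat f',\hat g')=\mathrm{tp}(\hat f,\hat g)$, then $\mathrm{tp}(\bar f',\bar g')=\mathrm{tp}(\bar f,\bar g)$.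
   Context: A linear continuum is a dense linear order with the least upper bound property; with endpoints means it has a least and greatest element. $M_L$ is the set of functions $f:L\to[0,1]$ that are nondecreasing, continuous in the order topology, with $\inf f=0$ and $\sup f=1$, with the sup metric, regarded as a metric structure in the language of binary predicates $\varphi_\alpha$ ($\alpha\in\mathbb{Q}\cap[0,1]$), where $\varphi_\alpha(f,g)=f(t)$ for any $t\in L$ with $f(t)+g(t)=\alpha$. Types are over $\emptyset$. (The pointwise average of elements of $M_L$ is again in $M_L$.) *)

theory Defs
  imports "HOL-Analysis.Analysis"
begin

text \<open>L is modelled as a type of class linear_continuum_topology (dense, conditionally
complete linear order with at least two points, carrying the order topology) which in
addition has a least element (order_bot) and a greatest element (order_top).\<close>

definition M_L :: "('a::{linear_continuum_topology,order_bot,order_top} \<Rightarrow> real) set" where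
  "M_L = {f. mono f \<and> continuous_on UNIV f \<and> (\<forall>t. f t \<in> {0..1})
            \<and> (INF t. f t) = 0 \<and> (SUP t. f t) = 1}"

definition phi :: "real \<Rightarrow> ('a \<Rightarrow> real) \<Rightarrow> ('a \<Rightarrow> real) \<Rightarrow> real" where
  "phi \<alpha> f g = (THE y. \<exists>t. f t + g t = \<alpha> \<and> y = f t)"

definition supdist :: "('a \<Rightarrow> real) \<Rightarrow> ('a \<Rightarrow> real) \<Rightarrow> real" where
  "supdist f g = (SUP t. \<bar>f t - g t\<bar>)"

text \<open>A connective applied to a list of k formulas is a function on nat \<Rightarrow> real whose
arguments beyond k are set to 0.\<close>
datatype fml =
    Pred rat nat nat
  | Dist nat nat
  | Conn "(nat \<Rightarrow> real) \<Rightarrow> real" "fml list"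
  | FSup nat fml
  | FInf nat fml

definition cube :: "(nat \<Rightarrow> real) set" where
  "cube = {v. \<forall>i. v i \<in> {0..1}}"

fun wf :: "fml \<Rightarrow> bool" where
  "wf (Pred \<alpha> i j) = (0 \<le> \<alpha> \<and> \<alpha> \<le> 1)"
| "wf (Dist i j) = True"
| "wf (Conn u ps) = (continuous_on cube u \<and> (\<forall>v\<in>cube. u v \<in> {0..1}) \<and> (\<forall>p\<in>set ps. wf p))"
| "wf (FSup x p) = wf p"
| "wf (FInf x p) = wf p"

fun fv :: "fml \<Rightarrow> nat set" where
  "fv (Pred \<alpha> i j) = {i, j}"
| "fv (Dist i j) = {i, j}"
| "fv (Conn u ps) = (\<Union>p\<in>set ps. fv p)"
| "fv (FSup x p) = fv p - {x}"
| "fv (FInf x p) = fv p - {x}"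

fun eval :: "(nat \<Rightarrow> ('a::{linear_continuum_topology,order_bot,order_top} \<Rightarrow> real)) \<Rightarrow> fml \<Rightarrow> real" where
  "eval \<rho> (Pred \<alpha> i j) = phi (of_rat \<alpha>) (\<rho> i) (\<rho> j)"
| "eval \<rho> (Dist i j) = supdist (\<rho> i) (\<rho> j)"
| "eval \<rho> (Conn u ps) =
     (let vs = map (eval \<rho>) ps in u (\<lambda>k. if k < length vs then vs ! k else 0))"
| "eval \<rho> (FSup x p) = (SUP g\<in>M_L. eval (\<rho>(x := g)) p)"
| "eval \<rho> (FInf x p) = (INF g\<in>M_L. eval (\<rho>(x := g)) p)"

definition asg :: "('a \<Rightarrow> real) list \<Rightarrow> nat \<Rightarrow> ('a \<Rightarrow> real)" where
  "asg xs i = (if i < length xs then xs ! i else undefined)"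

text \<open>tp(xs) = tp(ys) (types over the empty set in M_L): same length and every formula
with free variables among the first length xs variables gets the same value.\<close>
definition same_tp :: "('a::{linear_continuum_topology,order_bot,order_top} \<Rightarrow> real) list
    \<Rightarrow> ('a \<Rightarrow> real) list \<Rightarrow> bool" where
  "same_tp xs ys \<longleftrightarrow> length xs = length ys \<and>
     (\<forall>p. wf p \<and> fv p \<subseteq> {..<length xs} \<longrightarrow> eval (asg xs) p = eval (asg ys) p)"

definition avg :: "('a \<Rightarrow> real) list \<Rightarrow> ('a \<Rightarrow> real)" where
  "avg fs = (\<lambda>t. (\<Sum>f\<leftarrow>fs. f t) / real (length fs))"

end

theory Submission
  imports Defs "HOL-Analysis.Analysis"
begin


type_synonym 'a fn = "'a \<Rightarrow> real"

lemma mlx_D: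
  assumes "f \<in> M_L"
  shows "mono f" "continuous_on UNIV f" "\<And>t. 0 \<le> f t" "\<And>t. f t \<le> 1"
  using assms by (auto simp: M_L_def)

lemma mlx_bot:
  fixes f :: "'a::{linear_continuum_topology,order_bot,order_top} \<Rightarrow> real"
  assumes "f \<in> M_L" shows "f bot = 0"
proof -
  have "(INF t. f t) = f bot"
    by (rule cInf_eq_minimum) (use mlx_D(1)[OF assms] in \<open>auto simp: mono_def\<close>)
  thus ?thesis using assms by (simp add: M_L_def)
qed

lemma mlx_top:
  fixes f :: "'a::{linear_continuum_topology,order_bot,order_top} \<Rightarrow> real"
  assumes "f \<in> M_L" shows "f top = 1"
proof -
  have "(SUP t. f t) = f top"
    by (rule cSup_eq_maximum) (use mlx_D(1)[OF assms] in \<open>auto simp: mono_def\<close>)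
  thus ?thesis using assms by (simp add: M_L_def)
qed

lemma mlx_I:
  fixes f :: "'a::{linear_continuum_topology,order_bot,order_top} \<Rightarrow> real"
  assumes "mono f" "continuous_on UNIV f" "\<And>t. 0 \<le> f t" "\<And>t. f t \<le> 1" "f bot = 0" "f top = 1"
  shows "f \<in> M_L"
proof -
  have "(INF t. f t) = f bot"
    by (rule cInf_eq_minimum) (use assms(1) in \<open>auto simp: mono_def\<close>)
  moreover have "(SUP t. f t) = f top"
    by (rule cSup_eq_maximum) (use assms(1) in \<open>auto simp: mono_def\<close>)
  ultimately show ?thesis using assms by (auto simp: M_L_def)
qed

lemma IVT_L:
  fixes f :: "'a::{linear_continuum_topology,order_bot,order_top} \<Rightarrow> real"
  assumes "continuous_on UNIV f" "f bot \<le> y" "y \<le> f top"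
  shows "\<exists>t. f t = y"
  using IVT'[of f bot y top] assms continuous_on_subset by fastforce

lemma mono_sum_eq:
  fixes f g :: "'a::linorder \<Rightarrow> real"
  assumes "mono f" "mono g" "f t + g t = f s + g s"
  shows "f t = f s"
proof (cases "t \<le> s")
  case True
  then show ?thesis using assms monoD[OF assms(1) True] monoD[OF assms(2) True] by linarith
next
  case False
  then have "s \<le> t" by simp
  then show ?thesis using assms monoD[OF assms(1)] monoD[OF assms(2)] by force
qed

lemma phi_eq:
  assumes "f \<in> M_L" "g \<in> M_L" "f t + g t = \<alpha>"
  shows "phi \<alpha> f g = f t"
  unfolding phi_def
proof (rule the_equality)
  show "\<exists>s. f s + g s = \<alpha> \<and> f t = f s" using assms by auto
  fix y assume "\<exists>s. f s + g s = \<alpha> \<and> y = f s"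
  then obtain s where "f s + g s = \<alpha>" "y = f s" by auto
  then show "y = f t" using mono_sum_eq[OF mlx_D(1)[OF assms(1)] mlx_D(1)[OF assms(2)], of s t] assms(3)
    by auto
qed

lemma phi_ex:
  fixes f :: "'a::{linear_continuum_topology,order_bot,order_top} \<Rightarrow> real"
  assumes "f \<in> M_L" "g \<in> M_L" "0 \<le> \<alpha>" "\<alpha> \<le> 2"
  shows "\<exists>t. f t + g t = \<alpha>"
proof -
  have "continuous_on UNIV (\<lambda>t. f t + g t)"
    using mlx_D(2)[OF assms(1)] mlx_D(2)[OF assms(2)] by (intro continuous_intros)
  then show ?thesis using IVT_L[of "\<lambda>t. f t + g t" \<alpha>] assms mlx_bot[OF assms(1)] mlx_top[OF assms(1)]
    mlx_bot[OF assms(2)] mlx_top[OF assms(2)] by auto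
qed

lemma phi_range:
  fixes f :: "'a::{linear_continuum_topology,order_bot,order_top} \<Rightarrow> real"
  assumes "f \<in> M_L" "g \<in> M_L" "0 \<le> \<alpha>" "\<alpha> \<le> 2"
  shows "phi \<alpha> f g \<in> {0..1}"
  using phi_ex[OF assms] phi_eq[OF assms(1,2)] mlx_D[OF assms(1)] by force

lemma supdist_bdd:
  assumes "f \<in> M_L" "g \<in> M_L"
  shows "bdd_above (range (\<lambda>t. \<bar>f t - g t\<bar>))"
proof (intro bdd_aboveI[of _ 1])
  fix x assume "x \<in> range (\<lambda>t. \<bar>f t - g t\<bar>)"
  then obtain t where "x = \<bar>f t - g t\<bar>" by auto
  then show "x \<le> 1" using mlx_D(3,4)[OF assms(1), of t] mlx_D(3,4)[OF assms(2), of t] by auto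
qed

lemma supdist_range:
  assumes "f \<in> M_L" "g \<in> M_L"
  shows "supdist f g \<in> {0..1}"
proof -
  have b: "\<bar>f t - g t\<bar> \<le> 1" for t using mlx_D(3,4)[OF assms(1), of t] mlx_D(3,4)[OF assms(2), of t] by auto
  have "supdist f g \<le> 1" unfolding supdist_def by (rule cSUP_least) (use b in auto)
  moreover have "0 \<le> supdist f g" unfolding supdist_def
    by (rule cSUP_upper2[OF supdist_bdd[OF assms], of undefined]) auto
  ultimately show ?thesis by auto
qed

definition good :: "nat set \<Rightarrow> (nat \<Rightarrow> ('a::{linear_continuum_topology,order_bot,order_top} \<Rightarrow> real)) \<Rightarrow> bool" where
  "good V \<rho> \<longleftrightarrow> (\<forall>i\<in>V. \<rho> i \<in> M_L)"

definition padv :: "real list \<Rightarrow> nat \<Rightarrow> real" where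
  "padv vs = (\<lambda>k. if k < length vs then vs ! k else 0)"

lemma eval_Conn: "eval \<rho> (Conn u ps) = u (padv (map (eval \<rho>) ps))"
  by (simp add: padv_def Let_def)

lemma padv_cube: "(\<forall>x\<in>set vs. x \<in> {0..1}) \<Longrightarrow> padv vs \<in> cube"
  by (auto simp: padv_def cube_def)

lemma eval_range:
  fixes \<rho> :: "nat \<Rightarrow> ('a::{linear_continuum_topology,order_bot,order_top} \<Rightarrow> real)"
  assumes "wf p" "good (fv p) \<rho>" "(M_L::('a \<Rightarrow> real) set) \<noteq> {}"
  shows "eval \<rho> p \<in> {0..1}"
  using assms
proof (induction p arbitrary: \<rho>)
  case (Pred \<alpha> i j)
  have a: "0 \<le> real_of_rat \<alpha>" "real_of_rat \<alpha> \<le> 2" using Pred(1)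
    by (simp_all add: zero_le_of_rat_iff) (metis of_rat_1 of_rat_less_eq one_le_numeral order.trans)
  moreover have b: "\<rho> i \<in> M_L" "\<rho> j \<in> M_L" using Pred by (auto simp: good_def)
  show ?case unfolding eval.simps by (rule phi_range[OF b a])
next
  case (Dist i j)
  then have b: "\<rho> i \<in> M_L" "\<rho> j \<in> M_L" by (auto simp: good_def)
  show ?case unfolding eval.simps by (rule supdist_range[OF b])
next
  case (Conn u ps)
  have "padv (map (eval \<rho>) ps) \<in> cube"
    using Conn by (intro padv_cube) (auto simp: good_def)
  then show ?case using Conn.prems unfolding eval_Conn by auto
next
  case (FSup x p)
  have r: "\<And>g. g \<in> M_L \<Longrightarrow> eval (\<rho>(x:=g)) p \<in> {0..1}"
    using FSup by (intro FSup.IH) (auto simp: good_def)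
  obtain g0 :: "'a \<Rightarrow> real" where g0: "g0 \<in> M_L" using FSup by auto
  have "(SUP g\<in>M_L. eval (\<rho>(x:=g)) p) \<le> 1" by (rule cSUP_least) (use r FSup in auto)
  moreover have "0 \<le> (SUP g\<in>M_L. eval (\<rho>(x:=g)) p)"
    by (rule cSUP_upper2[OF _ g0]) (use r g0 in \<open>auto intro!: bdd_aboveI[of _ 1]\<close>)
  ultimately show ?case by simp
next
  case (FInf x p)
  have r: "\<And>g. g \<in> M_L \<Longrightarrow> eval (\<rho>(x:=g)) p \<in> {0..1}"
    using FInf by (intro FInf.IH) (auto simp: good_def)
  obtain g0 :: "'a \<Rightarrow> real" where g0: "g0 \<in> M_L" using FInf by auto
  have "0 \<le> (INF g\<in>M_L. eval (\<rho>(x:=g)) p)" by (rule cINF_greatest) (use r FInf in auto)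
  moreover have "(INF g\<in>M_L. eval (\<rho>(x:=g)) p) \<le> 1"
    by (rule cINF_lower2[OF _ g0]) (use r g0 in \<open>auto intro!: bdd_belowI[of _ 0]\<close>)
  ultimately show ?case by simp
qed


lemma sup_approx:
  fixes a b :: "'b \<Rightarrow> real"
  assumes "M \<noteq> {}" "bdd_above (b ` M)" "\<And>g. g \<in> M \<Longrightarrow> \<exists>g'\<in>M. a g \<le> b g' + e"
  shows "(SUP g\<in>M. a g) \<le> (SUP g\<in>M. b g) + e"
proof (rule cSUP_least[OF assms(1)])
  fix g assume "g \<in> M"
  then obtain g' where "g' \<in> M" "a g \<le> b g' + e" using assms(3) by blast
  moreover have "b g' \<le> (SUP g\<in>M. b g)" by (rule cSUP_upper[OF \<open>g' \<in> M\<close> assms(2)])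
  ultimately show "a g \<le> (SUP g\<in>M. b g) + e" by linarith
qed

lemma inf_approx:
  fixes a b :: "'b \<Rightarrow> real"
  assumes "M \<noteq> {}" "bdd_below (a ` M)" "\<And>g'. g' \<in> M \<Longrightarrow> \<exists>g\<in>M. a g \<le> b g' + e"
  shows "(INF g\<in>M. a g) \<le> (INF g\<in>M. b g) + e"
proof -
  have "(INF g\<in>M. a g) - e \<le> (INF g\<in>M. b g)"
  proof (rule cINF_greatest[OF assms(1)])
    fix g' assume "g' \<in> M"
    then obtain g where "g \<in> M" "a g \<le> b g' + e" using assms(3) by blast
    moreover have "(INF g\<in>M. a g) \<le> a g" by (rule cINF_lower[OF assms(2) \<open>g \<in> M\<close>])
    ultimately show "(INF g\<in>M. a g) - e \<le> b g'" by linarith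
  qed
  then show ?thesis by linarith
qed

lemma sup_inf_close:
  fixes a b :: "'b \<Rightarrow> real"
  assumes "M \<noteq> {}" "\<And>g. g \<in> M \<Longrightarrow> a g \<in> {0..1}" "\<And>g. g \<in> M \<Longrightarrow> b g \<in> {0..1}"
    and "\<And>g. g \<in> M \<Longrightarrow> \<exists>g'\<in>M. \<bar>a g - b g'\<bar> \<le> e"
    and "\<And>g'. g' \<in> M \<Longrightarrow> \<exists>g\<in>M. \<bar>a g - b g'\<bar> \<le> e"
  shows "\<bar>(SUP g\<in>M. a g) - (SUP g\<in>M. b g)\<bar> \<le> e" "\<bar>(INF g\<in>M. a g) - (INF g\<in>M. b g)\<bar> \<le> e"
proof -
  have ba: "bdd_above (a ` M)" "bdd_below (a ` M)" using assms(2)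
    by (auto intro!: bdd_aboveI[of _ 1] bdd_belowI[of _ 0])
  have bb: "bdd_above (b ` M)" "bdd_below (b ` M)" using assms(3)
    by (auto intro!: bdd_aboveI[of _ 1] bdd_belowI[of _ 0])
  have "(SUP g\<in>M. a g) \<le> (SUP g\<in>M. b g) + e"
    by (rule sup_approx[OF assms(1) bb(1)]) (use assms(4) in force)
  moreover have "(SUP g\<in>M. b g) \<le> (SUP g\<in>M. a g) + e"
    by (rule sup_approx[OF assms(1) ba(1)]) (use assms(5) in force)
  ultimately show "\<bar>(SUP g\<in>M. a g) - (SUP g\<in>M. b g)\<bar> \<le> e" by linarith
  have "(INF g\<in>M. a g) \<le> (INF g\<in>M. b g) + e"
    by (rule inf_approx[OF assms(1) ba(2)]) (use assms(5) in force)
  moreover have "(INF g\<in>M. b g) \<le> (INF g\<in>M. a g) + e"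
    by (rule inf_approx[OF assms(1) bb(2)]) (use assms(4) in force)
  ultimately show "\<bar>(INF g\<in>M. a g) - (INF g\<in>M. b g)\<bar> \<le> e" by linarith
qed

lemma mono_abs_le:
  fixes f g :: "'a::linorder \<Rightarrow> real"
  assumes "mono f" "mono g"
  shows "\<bar>f t - f s\<bar> \<le> \<bar>(f t + g t) - (f s + g s)\<bar>"
proof (cases "t \<le> s")
  case True
  then show ?thesis using monoD[OF assms(1) True] monoD[OF assms(2) True] by linarith
next
  case False
  then have "s \<le> t" by simp
  then show ?thesis using monoD[OF assms(1) \<open>s \<le> t\<close>] monoD[OF assms(2) \<open>s \<le> t\<close>] by linarith
qed

lemma phi_cont:
  fixes f :: "'a::{linear_continuum_topology,order_bot,order_top} \<Rightarrow> real"
  assumes "f \<in> M_L" "g \<in> M_L" "f' \<in> M_L" "g' \<in> M_L" "0 \<le> \<alpha>" "\<alpha> \<le> 2"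
    and "\<And>t. \<bar>f t - f' t\<bar> \<le> d" "\<And>t. \<bar>g t - g' t\<bar> \<le> d"
  shows "\<bar>phi \<alpha> f g - phi \<alpha> f' g'\<bar> \<le> 3 * d"
proof -
  obtain t where t: "f t + g t = \<alpha>" using phi_ex[OF assms(1,2,5,6)] by auto
  obtain s where s: "f' s + g' s = \<alpha>" using phi_ex[OF assms(3,4,5,6)] by auto
  have "\<bar>f t - f s\<bar> \<le> \<bar>(f t + g t) - (f s + g s)\<bar>"
    by (rule mono_abs_le[OF mlx_D(1)[OF assms(1)] mlx_D(1)[OF assms(2)]])
  moreover have "\<bar>(f t + g t) - (f s + g s)\<bar> \<le> 2 * d"
    using t s assms(7)[of s] assms(8)[of s] by linarith
  ultimately show ?thesis using phi_eq[OF assms(1,2) t] phi_eq[OF assms(3,4) s] assms(7)[of s]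
    by linarith
qed

lemma supdist_cont:
  fixes f :: "'a::{linear_continuum_topology,order_bot,order_top} \<Rightarrow> real"
  assumes "f \<in> M_L" "g \<in> M_L" "f' \<in> M_L" "g' \<in> M_L"
    and "\<And>t. \<bar>f t - f' t\<bar> \<le> d" "\<And>t. \<bar>g t - g' t\<bar> \<le> d"
  shows "\<bar>supdist f g - supdist f' g'\<bar> \<le> 2 * d"
proof -
  have r: "\<bar>f t - g t\<bar> \<in> {0..1}" "\<bar>f' t - g' t\<bar> \<in> {0..1}" for t
    using mlx_D(3,4)[OF assms(1), of t] mlx_D(3,4)[OF assms(2), of t]
      mlx_D(3,4)[OF assms(3), of t] mlx_D(3,4)[OF assms(4), of t] by auto
  have c: "\<bar>\<bar>f t - g t\<bar> - \<bar>f' t - g' t\<bar>\<bar> \<le> 2 * d" for t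
    using assms(5)[of t] assms(6)[of t] by linarith
  show ?thesis unfolding supdist_def
    by (rule sup_inf_close(1)) (use r c in auto)
qed

lemma dist_fun_le:
  fixes v w :: "nat \<Rightarrow> real"
  assumes "\<And>k. \<bar>v k - w k\<bar> \<le> d"
  shows "dist v w \<le> 2 * d"
proof -
  have d0: "0 \<le> d" using assms[of 0] by linarith
  have le: "(1/2)^n * min (dist (v (from_nat n)) (w (from_nat n))) 1 \<le> (1/2::real)^n * d" for n
    using assms[of "from_nat n"] by (intro mult_left_mono) (auto simp: dist_real_def)
  have sg: "summable (\<lambda>n. (1/2::real)^n * d)"
    by (intro summable_mult2) simp
  have s1: "summable (\<lambda>n. (1/2::real)^n * min (dist (v (from_nat n)) (w (from_nat n))) 1)"
    by (rule summable_comparison_test'[OF sg, of 0]) (use le in auto)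
  have "dist v w \<le> (\<Sum>n. (1/2::real)^n * d)"
    unfolding dist_fun_def by (rule suminf_le[OF le s1 sg])
  also have "\<dots> = (\<Sum>n. (1/2::real)^n) * d" by (rule suminf_mult2[symmetric]) simp
  also have "\<dots> = 2 * d" using suminf_geometric[of "1/2::real"] by simp
  finally show ?thesis .
qed

lemma compact_cube: "compact cube"
proof -
  have "cube = PiE UNIV (\<lambda>_. {0..1::real})" by (auto simp: cube_def PiE_def extensional_def)
  moreover have "compactin (product_topology (\<lambda>i. euclidean) UNIV) (PiE UNIV (\<lambda>_::nat. {0..1::real}))"
    by (subst compactin_PiE) auto
  ultimately show ?thesis unfolding euclidean_product_topology by simp
qed

lemma uc_cube:
  assumes "continuous_on cube u" "(e::real) > 0"
  shows "\<exists>d>0. \<forall>v\<in>cube. \<forall>w\<in>cube. (\<forall>k. \<bar>v k - w k\<bar> \<le> d) \<longrightarrow> \<bar>u v - u w\<bar> < e"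
proof -
  have "uniformly_continuous_on cube u" by (rule compact_uniformly_continuous[OF assms(1) compact_cube])
  then obtain d0 where d0: "d0 > 0" "\<And>x x'. x \<in> cube \<Longrightarrow> x' \<in> cube \<Longrightarrow> dist x' x < d0 \<Longrightarrow> dist (u x') (u x) < e"
    unfolding uniformly_continuous_on_def using assms(2) by metis
  show ?thesis
  proof (intro exI[of _ "d0/3"] conjI ballI impI)
    fix v w assume vw: "v \<in> cube" "w \<in> cube" "\<forall>k. \<bar>v k - w k\<bar> \<le> d0/3"
    have "dist v w \<le> 2 * (d0/3)" by (rule dist_fun_le) (use vw in auto)
    then have "dist v w < d0" using d0 by linarith
    then show "\<bar>u v - u w\<bar> < e" using d0(2)[OF vw(2) vw(1)] by (simp add: dist_real_def)
  qed (use d0 in auto)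
qed


lemma list_delta:
  assumes "\<forall>x\<in>set xs. \<forall>e>0. \<exists>d>0. \<forall>y. R d y \<longrightarrow> P e x y"
    and "\<And>d d' y. d' \<le> d \<Longrightarrow> R d' y \<Longrightarrow> R d y"
    and "(e::real) > 0"
  shows "\<exists>d>0. \<forall>y. R (d::real) y \<longrightarrow> (\<forall>x\<in>set xs. P e x y)"
  using assms(1)
proof (induction xs)
  case Nil
  then show ?case by (intro exI[of _ 1]) auto
next
  case (Cons a xs)
  obtain d1 where d1: "d1 > 0" "\<forall>y. R d1 y \<longrightarrow> P e a y" using Cons.prems assms(3) by auto
  obtain d2 where d2: "d2 > 0" "\<forall>y. R d2 y \<longrightarrow> (\<forall>x\<in>set xs. P e x y)" using Cons by auto
  show ?case
  proof (intro exI[of _ "min d1 d2"] conjI allI impI)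
    fix y assume "R (min d1 d2) y"
    then have "R d1 y" "R d2 y" using assms(2)[of "min d1 d2"] by auto
    then show "\<forall>x\<in>set (a # xs). P e x y" using d1 d2 by auto
  qed (use d1 d2 in auto)
qed

lemma padv_eval_cube:
  fixes \<rho> :: "nat \<Rightarrow> ('a::{linear_continuum_topology,order_bot,order_top} \<Rightarrow> real)"
  assumes "\<forall>q\<in>set ps. wf q" "good (\<Union>q\<in>set ps. fv q) \<rho>" "(M_L::('a \<Rightarrow> real) set) \<noteq> {}"
  shows "padv (map (eval \<rho>) ps) \<in> cube"
proof (intro padv_cube ballI)
  fix z assume "z \<in> set (map (eval \<rho>) ps)"
  then obtain q where q: "q \<in> set ps" "z = eval \<rho> q" by auto
  have "good (fv q) \<rho>" using assms(2) q by (auto simp: good_def)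
  then show "z \<in> {0..1}" using eval_range[of q \<rho>] assms q by auto
qed

definition close :: "nat set \<Rightarrow> real \<Rightarrow> (nat \<Rightarrow> 'a \<Rightarrow> real) \<Rightarrow> (nat \<Rightarrow> 'a \<Rightarrow> real) \<Rightarrow> bool" where
  "close V d \<rho> \<rho>' \<longleftrightarrow> (\<forall>i\<in>V. \<forall>t. \<bar>\<rho> i t - \<rho>' i t\<bar> \<le> d)"

lemma eval_cont:
  fixes p :: fml
  assumes "wf p" "(M_L::('a::{linear_continuum_topology,order_bot,order_top} \<Rightarrow> real) set) \<noteq> {}" "e > 0"
  shows "\<exists>d>0. \<forall>(\<rho>::nat \<Rightarrow> 'a \<Rightarrow> real) \<rho>'. good (fv p) \<rho> \<longrightarrow> good (fv p) \<rho>' \<longrightarrow> close (fv p) d \<rho> \<rho>'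
            \<longrightarrow> \<bar>eval \<rho> p - eval \<rho>' p\<bar> \<le> e"
  using assms(1,3)
proof (induction p arbitrary: e)
  case (Pred \<alpha> i j)
  have a: "0 \<le> real_of_rat \<alpha>" "real_of_rat \<alpha> \<le> 2" using Pred(1)
    by (simp_all add: zero_le_of_rat_iff) (metis of_rat_1 of_rat_less_eq one_le_numeral order.trans)
  show ?case
  proof (intro exI[of _ "e/3"] conjI allI impI)
    fix \<rho> \<rho>' :: "nat \<Rightarrow> 'a \<Rightarrow> real"
    assume h: "good (fv (Pred \<alpha> i j)) \<rho>" "good (fv (Pred \<alpha> i j)) \<rho>'" "close (fv (Pred \<alpha> i j)) (e/3) \<rho> \<rho>'"
    have "\<bar>phi (real_of_rat \<alpha>) (\<rho> i) (\<rho> j) - phi (real_of_rat \<alpha>) (\<rho>' i) (\<rho>' j)\<bar> \<le> 3 * (e/3)"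
      by (rule phi_cont) (use h a in \<open>auto simp: good_def close_def\<close>)
    then show "\<bar>eval \<rho> (Pred \<alpha> i j) - eval \<rho>' (Pred \<alpha> i j)\<bar> \<le> e" by simp
  qed (use Pred in auto)
next
  case (Dist i j)
  show ?case
  proof (intro exI[of _ "e/2"] conjI allI impI)
    fix \<rho> \<rho>' :: "nat \<Rightarrow> 'a \<Rightarrow> real"
    assume h: "good (fv (Dist i j)) \<rho>" "good (fv (Dist i j)) \<rho>'" "close (fv (Dist i j)) (e/2) \<rho> \<rho>'"
    have "\<bar>supdist (\<rho> i) (\<rho> j) - supdist (\<rho>' i) (\<rho>' j)\<bar> \<le> 2 * (e/2)"
      by (rule supdist_cont) (use h in \<open>auto simp: good_def close_def\<close>)
    then show "\<bar>eval \<rho> (Dist i j) - eval \<rho>' (Dist i j)\<bar> \<le> e" by simp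
  qed (use Dist in auto)
next
  case (Conn u ps)
  define F where "F = fv (Conn u ps)"
  obtain d1 where d1: "d1 > 0" "\<forall>v\<in>cube. \<forall>w\<in>cube. (\<forall>k. \<bar>v k - w k\<bar> \<le> d1) \<longrightarrow> \<bar>u v - u w\<bar> < e"
    using uc_cube[of u e] Conn.prems by auto
  define R where "R = (\<lambda>d (y::(nat \<Rightarrow> 'a \<Rightarrow> real) \<times> (nat \<Rightarrow> 'a \<Rightarrow> real)).
      good F (fst y) \<and> good F (snd y) \<and> close F d (fst y) (snd y))"
  have "\<exists>d>0. \<forall>y. R d y \<longrightarrow> (\<forall>q\<in>set ps. \<bar>eval (fst y) q - eval (snd y) q\<bar> \<le> d1)"
  proof (rule list_delta[where P = "\<lambda>e q y. \<bar>eval (fst y) q - eval (snd y) q\<bar> \<le> e"])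
    show "\<forall>x\<in>set ps. \<forall>e>0. \<exists>d>0. \<forall>y. R d y \<longrightarrow> \<bar>eval (fst y) x - eval (snd y) x\<bar> \<le> e"
    proof (intro ballI allI impI)
      fix q and e' :: real assume q: "q \<in> set ps" "e' > 0"
      then obtain d where d: "d > 0" "\<forall>(\<rho>::nat \<Rightarrow> 'a \<Rightarrow> real) \<rho>'. good (fv q) \<rho> \<longrightarrow> good (fv q) \<rho>' \<longrightarrow> close (fv q) d \<rho> \<rho>'
            \<longrightarrow> \<bar>eval \<rho> q - eval \<rho>' q\<bar> \<le> e'"
        using Conn.IH[of q e'] Conn.prems by auto
      have sub: "fv q \<subseteq> F" using q by (auto simp: F_def)
      show "\<exists>d>0. \<forall>y. R d y \<longrightarrow> \<bar>eval (fst y) q - eval (snd y) q\<bar> \<le> e'"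
      proof (intro exI[of _ d] conjI allI impI)
        fix y assume "R d y"
        then have "good (fv q) (fst y)" "good (fv q) (snd y)" "close (fv q) d (fst y) (snd y)"
          using sub by (auto simp: R_def good_def close_def)
        then show "\<bar>eval (fst y) q - eval (snd y) q\<bar> \<le> e'" using d(2) by blast
      qed (use d in auto)
    qed
    show "\<And>d d' y. d' \<le> d \<Longrightarrow> R d' y \<Longrightarrow> R d y"
      by (auto simp: R_def close_def) (meson order.trans)
  qed (use d1 in auto)
  then obtain d where d: "d > 0" "\<forall>y. R d y \<longrightarrow> (\<forall>q\<in>set ps. \<bar>eval (fst y) q - eval (snd y) q\<bar> \<le> d1)"
    by auto
  show ?case
  proof (intro exI[of _ d] conjI allI impI)
    fix \<rho> \<rho>' :: "nat \<Rightarrow> 'a \<Rightarrow> real"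
    assume h: "good (fv (Conn u ps)) \<rho>" "good (fv (Conn u ps)) \<rho>'" "close (fv (Conn u ps)) d \<rho> \<rho>'"
    then have cl: "\<forall>q\<in>set ps. \<bar>eval \<rho> q - eval \<rho>' q\<bar> \<le> d1" using d(2)[rule_format, of "(\<rho>,\<rho>')"]
      by (auto simp: R_def F_def)
    have r1: "padv (map (eval \<rho>) ps) \<in> cube"
      using h Conn.prems by (intro padv_eval_cube assms(2)) auto
    have r2: "padv (map (eval \<rho>') ps) \<in> cube"
      using h Conn.prems by (intro padv_eval_cube assms(2)) auto
    have "\<forall>k. \<bar>padv (map (eval \<rho>) ps) k - padv (map (eval \<rho>') ps) k\<bar> \<le> d1"
      using cl d1 by (auto simp: padv_def)
    then have "\<bar>u (padv (map (eval \<rho>) ps)) - u (padv (map (eval \<rho>') ps))\<bar> < e"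
      using d1(2) r1 r2 by blast
    then show "\<bar>eval \<rho> (Conn u ps) - eval \<rho>' (Conn u ps)\<bar> \<le> e" unfolding eval_Conn by simp
  qed (use d in auto)
next
  case (FSup x p)
  obtain d where d: "d > 0" "\<forall>(\<rho>::nat \<Rightarrow> 'a \<Rightarrow> real) \<rho>'. good (fv p) \<rho> \<longrightarrow> good (fv p) \<rho>' \<longrightarrow> close (fv p) d \<rho> \<rho>'
            \<longrightarrow> \<bar>eval \<rho> p - eval \<rho>' p\<bar> \<le> e" using FSup.IH[of e] FSup.prems by (auto simp del: good_def close_def)

  show ?case
  proof (intro exI[of _ d] conjI allI impI)
    fix \<rho> \<rho>' :: "nat \<Rightarrow> 'a \<Rightarrow> real"
    assume h: "good (fv (FSup x p)) \<rho>" "good (fv (FSup x p)) \<rho>'" "close (fv (FSup x p)) d \<rho> \<rho>'"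
    have g: "good (fv p) (\<rho>(x:=g))" "good (fv p) (\<rho>'(x:=g))" "close (fv p) d (\<rho>(x:=g)) (\<rho>'(x:=g))"
      if "g \<in> M_L" for g
      using h that d by (auto simp: good_def close_def)
    have ra: "eval (\<rho>(x:=g)) p \<in> {0..1}" "eval (\<rho>'(x:=g)) p \<in> {0..1}" if "g \<in> M_L" for g
      using eval_range[OF _ g(1)[OF that] assms(2)] eval_range[OF _ g(2)[OF that] assms(2)] FSup.prems by auto
    have cl: "\<bar>eval (\<rho>(x:=g)) p - eval (\<rho>'(x:=g)) p\<bar> \<le> e" if "g \<in> M_L" for g
      using d(2) g[OF that] by blast
    have "\<bar>(SUP g\<in>M_L. eval (\<rho>(x:=g)) p) - (SUP g\<in>M_L. eval (\<rho>'(x:=g)) p)\<bar> \<le> e"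
      by (rule sup_inf_close(1)[OF assms(2) ra(1) ra(2)]) (use cl in blast)+
    then show "\<bar>eval \<rho> (FSup x p) - eval \<rho>' (FSup x p)\<bar> \<le> e" by simp
  qed (use d in auto)
next
  case (FInf x p)
  obtain d where d: "d > 0" "\<forall>(\<rho>::nat \<Rightarrow> 'a \<Rightarrow> real) \<rho>'. good (fv p) \<rho> \<longrightarrow> good (fv p) \<rho>' \<longrightarrow> close (fv p) d \<rho> \<rho>'
            \<longrightarrow> \<bar>eval \<rho> p - eval \<rho>' p\<bar> \<le> e" using FInf.IH[of e] FInf.prems by (auto simp del: good_def close_def)

  show ?case
  proof (intro exI[of _ d] conjI allI impI)
    fix \<rho> \<rho>' :: "nat \<Rightarrow> 'a \<Rightarrow> real"
    assume h: "good (fv (FInf x p)) \<rho>" "good (fv (FInf x p)) \<rho>'" "close (fv (FInf x p)) d \<rho> \<rho>'"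
    have g: "good (fv p) (\<rho>(x:=g))" "good (fv p) (\<rho>'(x:=g))" "close (fv p) d (\<rho>(x:=g)) (\<rho>'(x:=g))"
      if "g \<in> M_L" for g
      using h that d by (auto simp: good_def close_def)
    have ra: "eval (\<rho>(x:=g)) p \<in> {0..1}" "eval (\<rho>'(x:=g)) p \<in> {0..1}" if "g \<in> M_L" for g
      using eval_range[OF _ g(1)[OF that] assms(2)] eval_range[OF _ g(2)[OF that] assms(2)] FInf.prems by auto
    have cl: "\<bar>eval (\<rho>(x:=g)) p - eval (\<rho>'(x:=g)) p\<bar> \<le> e" if "g \<in> M_L" for g
      using d(2) g[OF that] by blast
    have "\<bar>(INF g\<in>M_L. eval (\<rho>(x:=g)) p) - (INF g\<in>M_L. eval (\<rho>'(x:=g)) p)\<bar> \<le> e"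
      by (rule sup_inf_close(2)[OF assms(2) ra(1) ra(2)]) (use cl in blast)+
    then show "\<bar>eval \<rho> (FInf x p) - eval \<rho>' (FInf x p)\<bar> \<le> e" by simp
  qed (use d in auto)
qed


definition pt :: "nat set \<Rightarrow> (nat \<Rightarrow> 'a \<Rightarrow> real) \<Rightarrow> 'a \<Rightarrow> nat \<Rightarrow> real" where
  "pt V \<rho> t = (\<lambda>i. if i \<in> V then \<rho> i t else 0)"

definition curve :: "nat set \<Rightarrow> (nat \<Rightarrow> 'a \<Rightarrow> real) \<Rightarrow> (nat \<Rightarrow> real) set" where
  "curve V \<rho> = range (pt V \<rho>)"

definition ssum :: "nat set \<Rightarrow> (nat \<Rightarrow> 'a \<Rightarrow> real) \<Rightarrow> 'a \<Rightarrow> real" where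
  "ssum V \<rho> t = (\<Sum>i\<in>V. \<rho> i t)"

definition gam :: "nat set \<Rightarrow> (nat \<Rightarrow> 'a \<Rightarrow> real) \<Rightarrow> real \<Rightarrow> nat \<Rightarrow> real" where
  "gam V \<rho> u = pt V \<rho> (SOME t. ssum V \<rho> t = u)"

context
  fixes V :: "nat set" and \<rho> :: "nat \<Rightarrow> ('a::{linear_continuum_topology,order_bot,order_top} \<Rightarrow> real)"
  assumes fin: "finite V" and gd: "good V \<rho>"
begin

lemma mlx_i: "i \<in> V \<Longrightarrow> \<rho> i \<in> M_L" using gd by (auto simp: good_def)

lemma ssum_mono: "t \<le> s \<Longrightarrow> ssum V \<rho> t \<le> ssum V \<rho> s"
  unfolding ssum_def by (intro sum_mono) (use mlx_i mlx_D(1) in \<open>auto simp: mono_def\<close>)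

lemma coord_le:
  assumes "i \<in> V" "t \<le> s"
  shows "0 \<le> \<rho> i s - \<rho> i t" "\<rho> i s - \<rho> i t \<le> ssum V \<rho> s - ssum V \<rho> t"
proof -
  have m: "\<And>j. j \<in> V \<Longrightarrow> 0 \<le> \<rho> j s - \<rho> j t"
    using mlx_i mlx_D(1) assms(2) by (auto simp: mono_def)
  then show "0 \<le> \<rho> i s - \<rho> i t" using assms by auto
  have "ssum V \<rho> s - ssum V \<rho> t = (\<Sum>j\<in>V. \<rho> j s - \<rho> j t)"
    by (simp add: ssum_def sum_subtractf)
  moreover have "\<rho> i s - \<rho> i t \<le> (\<Sum>j\<in>V. \<rho> j s - \<rho> j t)"
    by (rule member_le_sum[OF assms(1)]) (use m fin in auto)
  ultimately show "\<rho> i s - \<rho> i t \<le> ssum V \<rho> s - ssum V \<rho> t" by simp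
qed

lemma coord_abs:
  assumes "i \<in> V" shows "\<bar>\<rho> i t - \<rho> i s\<bar> \<le> \<bar>ssum V \<rho> t - ssum V \<rho> s\<bar>"
proof (cases "t \<le> s")
  case True
  with coord_le[OF assms True] show ?thesis by linarith
next
  case False
  then have "s \<le> t" by simp
  with coord_le[OF assms this] show ?thesis by linarith
qed

lemma pt_eq: "ssum V \<rho> t = ssum V \<rho> s \<Longrightarrow> pt V \<rho> t = pt V \<rho> s"
  using coord_abs[of _ t s] by (auto simp: pt_def)

lemma ssum_cont: "continuous_on UNIV (ssum V \<rho>)"
  unfolding ssum_def by (intro continuous_on_sum) (use mlx_i mlx_D(2) in auto)

lemma ssum_bot: "ssum V \<rho> bot = 0"
  unfolding ssum_def by (intro sum.neutral) (simp add: mlx_i mlx_bot)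

lemma ssum_top: "ssum V \<rho> top = real (card V)"
proof -
  have "(\<Sum>i\<in>V. \<rho> i top) = (\<Sum>i\<in>V. 1)" by (intro sum.cong) (simp_all add: mlx_i mlx_top)
  then show ?thesis by (simp add: ssum_def)
qed

lemma ssum_range: "range (ssum V \<rho>) = {0..real (card V)}"
proof
  show "range (ssum V \<rho>) \<subseteq> {0..real (card V)}"
    using ssum_mono[of bot] ssum_mono[of _ top] ssum_bot ssum_top by fastforce
  show "{0..real (card V)} \<subseteq> range (ssum V \<rho>)"
  proof
    fix u assume "u \<in> {0..real (card V)}"
    then obtain t where "ssum V \<rho> t = u" using IVT_L[OF ssum_cont, of u] ssum_bot ssum_top by auto
    then show "u \<in> range (ssum V \<rho>)" by (metis rangeI)
  qed
qed

lemma ssum_ex: "u \<in> {0..real (card V)} \<Longrightarrow> \<exists>t. ssum V \<rho> t = u"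
  using ssum_range by (metis imageE)

lemma sum_pt: "(\<Sum>i\<in>V. pt V \<rho> t i) = ssum V \<rho> t"
  unfolding pt_def ssum_def by simp

lemma gam_ssum: "gam V \<rho> (ssum V \<rho> t) = pt V \<rho> t"
proof -
  have "ssum V \<rho> (SOME s. ssum V \<rho> s = ssum V \<rho> t) = ssum V \<rho> t" by (rule someI) simp
  then show ?thesis unfolding gam_def by (rule pt_eq)
qed

lemma gam_out: "i \<notin> V \<Longrightarrow> gam V \<rho> u i = 0"
  by (simp add: gam_def pt_def)

lemma gam_le:
  assumes "u \<in> {0..real (card V)}" "u' \<in> {0..real (card V)}" "u \<le> u'"
  shows "0 \<le> gam V \<rho> u' i - gam V \<rho> u i \<and> gam V \<rho> u' i - gam V \<rho> u i \<le> u' - u"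
proof (cases "u = u'")
  case False
  obtain t where t: "ssum V \<rho> t = u" using ssum_ex[OF assms(1)] by auto
  obtain t' where t': "ssum V \<rho> t' = u'" using ssum_ex[OF assms(2)] by auto
  have "t \<le> t'"
  proof (rule ccontr)
    assume "\<not> t \<le> t'"
    then have "ssum V \<rho> t' \<le> ssum V \<rho> t" using ssum_mono by auto
    then show False using t t' assms(3) False by auto
  qed
  then show ?thesis using coord_le[of i t t'] gam_ssum[of t] gam_ssum[of t'] t t' assms(3)
    by (cases "i \<in> V") (auto simp: pt_def)
qed simp

lemma gam_lip:
  assumes "u \<in> {0..real (card V)}" "u' \<in> {0..real (card V)}"
  shows "\<bar>gam V \<rho> u i - gam V \<rho> u' i\<bar> \<le> \<bar>u - u'\<bar>"
  using gam_le[OF assms, of i] gam_le[OF assms(2,1), of i] by (cases "u \<le> u'") auto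

lemma gam_mono:
  assumes "u \<in> {0..real (card V)}" "u' \<in> {0..real (card V)}" "u \<le> u'"
  shows "gam V \<rho> u i \<le> gam V \<rho> u' i"
  using gam_le[OF assms, of i] by auto

lemma gam_range:
  assumes "u \<in> {0..real (card V)}"
  shows "gam V \<rho> u i \<in> {0..1}"
proof -
  obtain t where t: "ssum V \<rho> t = u" using ssum_ex[OF assms] by auto
  then show ?thesis using gam_ssum[of t] mlx_D(3,4)[OF mlx_i, of i t] by (auto simp: pt_def)
qed

lemma gam_0: "gam V \<rho> 0 i = 0"
  using gam_ssum[of bot] ssum_bot mlx_i mlx_bot by (auto simp: pt_def)

lemma gam_k: "i \<in> V \<Longrightarrow> gam V \<rho> (real (card V)) i = 1"
  using gam_ssum[of top] ssum_top mlx_i mlx_top by (auto simp: pt_def)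

lemma gam_cont: "continuous_on {0..real (card V)} (\<lambda>u. gam V \<rho> u i)"
  unfolding continuous_on_iff
proof (intro ballI allI impI)
  fix u e assume u: "u \<in> {0..real (card V)}" and e: "(e::real) > 0"
  show "\<exists>d>0. \<forall>u'\<in>{0..real (card V)}. dist u' u < d \<longrightarrow> dist (gam V \<rho> u' i) (gam V \<rho> u i) < e"
  proof (intro exI[of _ e] conjI ballI impI)
    fix u' assume "u' \<in> {0..real (card V)}" "dist u' u < e"
    then show "dist (gam V \<rho> u' i) (gam V \<rho> u i) < e"
      using gam_lip[OF _ u, of u' i] by (simp add: dist_real_def)
  qed (use e in auto)
qed

lemma pt_other:
  assumes "good V \<rho>'" "curve V \<rho> = curve V \<rho>'"
  shows "pt V \<rho>' t = gam V \<rho> (ssum V \<rho>' t)"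
proof -
  have "pt V \<rho>' t \<in> curve V \<rho>" using assms(2) by (simp add: curve_def)
  then obtain s where s: "pt V \<rho> s = pt V \<rho>' t" by (auto simp: curve_def)
  have "ssum V \<rho> s = ssum V \<rho>' t"
    using arg_cong[OF s, of "\<lambda>c. \<Sum>i\<in>V. c i"] by (simp add: pt_def ssum_def)
  then show ?thesis using gam_ssum[of s] s by simp
qed

end



lemma good_upd: "good W \<rho> \<Longrightarrow> g \<in> M_L \<Longrightarrow> good (insert x W) (\<rho>(x:=g))"
  by (auto simp: good_def)

lemma back_forth:
  fixes \<rho> \<rho>' :: "nat \<Rightarrow> ('a::{linear_continuum_topology,order_bot,order_top} \<Rightarrow> real)"
  assumes fin: "finite W" and xW: "x \<notin> W" and Wne: "W \<noteq> {}"
    and gd: "good W \<rho>" and gd': "good W \<rho>'" and cv: "curve W \<rho> = curve W \<rho>'"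
    and g: "g \<in> M_L" and dpos: "\<delta> > 0"
  shows "\<exists>\<rho>1 h'. good W \<rho>1 \<and> close W \<delta> \<rho>1 \<rho> \<and> h' \<in> M_L \<and>
            curve (insert x W) (\<rho>1(x:=g)) = curve (insert x W) (\<rho>'(x:=h'))"
proof -
  define k where "k = real (card W)"
  have k1: "k \<ge> 1" using fin Wne by (simp add: k_def Suc_le_eq card_gt_0_iff)
  define V' where "V' = insert x W"
  define \<rho>x where "\<rho>x = \<rho>(x:=g)"
  have finV': "finite V'" using fin by (simp add: V'_def)
  have gdx: "good V' \<rho>x" using good_upd[OF gd g] by (simp add: V'_def \<rho>x_def)
  have cardV': "real (card V') = k + 1" using fin xW by (simp add: V'_def k_def)
  define \<Gamma> where "\<Gamma> = gam V' \<rho>x"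
  define \<gamma> where "\<gamma> = gam W \<rho>"
  define \<tau> where "\<tau> = ssum V' \<rho>x"
  define S where "S = (\<lambda>v. \<Sum>i\<in>W. \<Gamma> v i)"
  define e where "e = \<delta> / (k + 1)"
  define c where "c = k / (k + e * (k + 1))"
  define P where "P = (\<lambda>v. c * (S v + e * v))"
  have epos: "e > 0" using dpos k1 by (simp add: e_def)
  have kpos: "k + e * (k + 1) > 0" using k1 epos by (simp add: add_pos_pos)
  have cpos: "c > 0" unfolding c_def using k1 kpos by (intro divide_pos_pos) auto
  have \<tau>_range: "range \<tau> = {0..k+1}" using ssum_range[OF finV' gdx] cardV' by (simp add: \<tau>_def)
  have \<tau>_ex: "\<exists>t. \<tau> t = v" if "v \<in> {0..k+1}" for v using \<tau>_range that by (metis imageE)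
  have \<Gamma>\<tau>: "\<Gamma> (\<tau> t) = pt V' \<rho>x t" for t unfolding \<Gamma>_def \<tau>_def by (rule gam_ssum[OF finV' gdx])
  have S\<tau>: "S (\<tau> t) = ssum W \<rho> t" for t
    unfolding S_def \<Gamma>\<tau> ssum_def by (intro sum.cong) (use xW in \<open>auto simp: pt_def V'_def \<rho>x_def\<close>)
  have g\<tau>: "\<Gamma> (\<tau> t) x = g t" for t unfolding \<Gamma>\<tau> by (simp add: pt_def V'_def \<rho>x_def)
  have \<tau>_bot: "\<tau> bot = 0" unfolding \<tau>_def by (rule ssum_bot[OF finV' gdx])
  have \<tau>_top: "\<tau> top = k + 1" unfolding \<tau>_def using ssum_top[OF finV' gdx] cardV' by simp
  have S_range: "S v \<in> {0..k}" if vin: "v \<in> {0..k+1}" for v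
  proof -
    obtain t where "\<tau> t = v" using \<tau>_ex[OF vin] by auto
    then show ?thesis using S\<tau>[of t] ssum_range[OF fin gd] k_def by auto
  qed
  have S_mono: "S v \<le> S v'" if "v \<in> {0..k+1}" "v' \<in> {0..k+1}" "v \<le> v'" for v v'
    unfolding S_def \<Gamma>_def
    by (intro sum_mono gam_mono[OF finV' gdx]) (use that cardV' in auto)
  have S_cont: "continuous_on {0..k+1} S"
    unfolding S_def \<Gamma>_def using gam_cont[OF finV' gdx] cardV'
    by (intro continuous_on_sum) auto
  have S0: "S 0 = 0" using S\<tau>[of bot] \<tau>_bot ssum_bot[OF fin gd] by simp
  have Sk: "S (k+1) = k" using S\<tau>[of top] \<tau>_top ssum_top[OF fin gd] k_def by simp
  have P0: "P 0 = 0" by (simp add: P_def S0)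
  have Pk: "P (k+1) = k"
  proof -
    have "P (k+1) = c * (k + e * (k+1))" by (simp add: P_def Sk)
    also have "\<dots> = k" using kpos by (simp add: c_def)
    finally show ?thesis .
  qed
  have P_cont: "continuous_on {0..k+1} P" unfolding P_def by (intro continuous_intros S_cont)
  have P_smono: "P v < P v'" if "v \<in> {0..k+1}" "v' \<in> {0..k+1}" "v < v'" for v v'
  proof -
    have "S v + e * v < S v' + e * v'" using S_mono[OF that(1,2)] that(3) epos by (simp add: add_mono_thms_linordered_field(4))
    then show ?thesis unfolding P_def using cpos by simp
  qed
  have P_inj: "inj_on P {0..k+1}"
    by (rule inj_onI) (metis P_smono less_irrefl linorder_neqE_linordered_idom)
  have P_img: "P ` {0..k+1} = {0..k}"
  proof
    show "P ` {0..k+1} \<subseteq> {0..k}"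
    proof
      fix y assume "y \<in> P ` {0..k+1}"
      then obtain v where v: "v \<in> {0..k+1}" "y = P v" by auto
      have "P 0 \<le> P v" using P_smono[of 0 v] v k1 by (cases "v = 0") auto
      moreover have "P v \<le> P (k+1)" using P_smono[of v "k+1"] v k1 by (cases "v = k+1") auto
      ultimately show "y \<in> {0..k}" using v P0 Pk by auto
    qed
    show "{0..k} \<subseteq> P ` {0..k+1}"
    proof
      fix y assume y: "y \<in> {0..k}"
      obtain v where "0 \<le> v" "v \<le> k+1" "P v = y"
        using IVT'[of P 0 y "k+1"] P_cont y P0 Pk k1 by auto
      then show "y \<in> P ` {0..k+1}" by auto
    qed
  qed
  have P_close: "\<bar>P v - S v\<bar> \<le> \<delta>" if "v \<in> {0..k+1}" for v
  proof -
    have pos: "k + e * (k+1) > 0" using k1 epos by (simp add: add_pos_pos)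
    have eq: "P v - S v = e * (k * v - (k+1) * S v) / (k + e * (k+1))"
      using pos by (simp add: P_def c_def field_simps)
    have b: "\<bar>k * v - (k+1) * S v\<bar> \<le> k * (k+1)"
    proof -
      have a1: "0 \<le> S v" "S v \<le> k" "0 \<le> v" "v \<le> k+1" using S_range[OF that] that by auto
      have "k * v \<le> k * (k+1)" using a1 k1 by (intro mult_left_mono) auto
      moreover have "(k+1) * S v \<le> (k+1) * k" using a1 k1 by (intro mult_left_mono) auto
      moreover have "0 \<le> k * v" "0 \<le> (k+1) * S v" using a1 k1 by auto
      ultimately show ?thesis by (auto simp: abs_le_iff algebra_simps)
    qed
    have "\<bar>P v - S v\<bar> = e * \<bar>k * v - (k+1) * S v\<bar> / (k + e * (k+1))"
      using eq epos pos by (simp add: abs_mult abs_div)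
    also have "\<dots> \<le> e * (k * (k+1)) / (k + e * (k+1))"
      using b epos pos by (intro divide_right_mono mult_left_mono) auto
    also have "\<dots> \<le> e * (k+1)"
    proof -
      have "e * (k * (k+1)) \<le> e * (k+1) * (k + e * (k+1))"
        using epos k1 by (simp add: algebra_simps)
      then show ?thesis using pos by (simp add: divide_le_eq)
    qed
    also have "\<dots> = \<delta>" using k1 by (simp add: e_def)
    finally show ?thesis .
  qed
  define Q where "Q = the_inv_into {0..k+1} P"
  have QP: "Q (P v) = v" if "v \<in> {0..k+1}" for v
    unfolding Q_def by (rule the_inv_into_f_f[OF P_inj that])
  have PQ: "P (Q u) = u" if "u \<in> {0..k}" for u
    unfolding Q_def by (rule f_the_inv_into_f[OF P_inj]) (use that P_img in auto)
  have Q_in: "Q u \<in> {0..k+1}" if "u \<in> {0..k}" for u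
    unfolding Q_def by (rule the_inv_into_into[OF P_inj]) (use that P_img in auto)
  have Q_cont: "continuous_on {0..k} Q"
    using continuous_on_inv[OF P_cont compact_Icc, of Q] QP P_img by auto
  have Q_mono: "Q u \<le> Q u'" if "u \<in> {0..k}" "u' \<in> {0..k}" "u \<le> u'" for u u'
  proof (rule ccontr)
    assume "\<not> Q u \<le> Q u'"
    then have "P (Q u') < P (Q u)" using P_smono[OF Q_in[OF that(2)] Q_in[OF that(1)]] by auto
    then show False using PQ that by auto
  qed
  have Q0: "Q 0 = 0" using QP[of 0] P0 k1 by auto
  have Qk: "Q k = k + 1" using QP[of "k+1"] Pk k1 by auto
  define h' where "h' = (\<lambda>t. \<Gamma> (Q (ssum W \<rho>' t)) x)"
  define \<rho>1 where "\<rho>1 = (\<lambda>i. if i \<in> W then (\<lambda>t. \<gamma> (P (\<tau> t)) i) else \<rho> i)"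
  have ssum'_range: "ssum W \<rho>' t \<in> {0..k}" for t using ssum_range[OF fin gd'] k_def by auto
  have \<tau>_in: "\<tau> t \<in> {0..k+1}" for t using \<tau>_range by auto
  have P\<tau>_in: "P (\<tau> t) \<in> {0..k}" for t using P_img \<tau>_in by auto
  have \<tau>_cont: "continuous_on UNIV \<tau>" unfolding \<tau>_def by (rule ssum_cont[OF finV' gdx])
  have \<tau>_mono: "mono \<tau>" unfolding \<tau>_def by (intro monoI ssum_mono[OF finV' gdx])
  have Gam_mono: "\<Gamma> v i \<le> \<Gamma> v' i" if "v \<in> {0..k+1}" "v' \<in> {0..k+1}" "v \<le> v'" for v v' i
    unfolding \<Gamma>_def by (rule gam_mono[OF finV' gdx]) (use that cardV' in auto)
  have Gam_cont: "continuous_on {0..k+1} (\<lambda>v. \<Gamma> v i)" for i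
    unfolding \<Gamma>_def using gam_cont[OF finV' gdx] cardV' by simp
  have Gam_range: "\<Gamma> v i \<in> {0..1}" if "v \<in> {0..k+1}" for v i
    unfolding \<Gamma>_def by (rule gam_range[OF finV' gdx]) (use that cardV' in auto)
  have gam_mono': "\<gamma> u i \<le> \<gamma> u' i" if "u \<in> {0..k}" "u' \<in> {0..k}" "u \<le> u'" for u u' i
    unfolding \<gamma>_def by (rule gam_mono[OF fin gd]) (use that k_def in auto)
  have gam_cont': "continuous_on {0..k} (\<lambda>u. \<gamma> u i)" for i
    unfolding \<gamma>_def using gam_cont[OF fin gd] k_def by simp
  have gam_range': "\<gamma> u i \<in> {0..1}" if "u \<in> {0..k}" for u i
    unfolding \<gamma>_def by (rule gam_range[OF fin gd]) (use that k_def in auto)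

  have hpML: "h' \<in> M_L"
  proof (rule mlx_I)
    show "mono h'" unfolding h'_def
    proof (rule monoI)
      fix t s :: 'a assume "t \<le> s"
      then have "ssum W \<rho>' t \<le> ssum W \<rho>' s" by (rule ssum_mono[OF fin gd'])
      then show "\<Gamma> (Q (ssum W \<rho>' t)) x \<le> \<Gamma> (Q (ssum W \<rho>' s)) x"
        by (intro Gam_mono Q_in ssum'_range Q_mono)
    qed
    show "continuous_on UNIV h'" unfolding h'_def
      by (rule continuous_on_compose2[OF Gam_cont continuous_on_compose2[OF Q_cont ssum_cont[OF fin gd']]])
         (use Q_in ssum'_range in auto)
    show "0 \<le> h' t" "h' t \<le> 1" for t unfolding h'_def using Gam_range[OF Q_in[OF ssum'_range]] by auto
    show "h' bot = 0" unfolding h'_def using ssum_bot[OF fin gd'] Q0 g\<tau>[of bot] \<tau>_bot mlx_bot[OF g] by simp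
    show "h' top = 1" unfolding h'_def using ssum_top[OF fin gd'] k_def Qk g\<tau>[of top] \<tau>_top mlx_top[OF g] by simp
  qed
  have \<rho>1_ML: "\<rho>1 i \<in> M_L" if i: "i \<in> W" for i
  proof -
    have e1: "\<rho>1 i = (\<lambda>t. \<gamma> (P (\<tau> t)) i)" using i by (simp add: \<rho>1_def)
    show ?thesis unfolding e1
    proof (rule mlx_I)
      show "mono (\<lambda>t. \<gamma> (P (\<tau> t)) i)"
      proof (rule monoI)
        fix t s :: 'a assume "t \<le> s"
        then have "\<tau> t \<le> \<tau> s" using \<tau>_mono by (simp add: mono_def)
        then have "P (\<tau> t) \<le> P (\<tau> s)" using P_smono[OF \<tau>_in \<tau>_in, of t s]
          by (cases "\<tau> t = \<tau> s") auto
        then show "\<gamma> (P (\<tau> t)) i \<le> \<gamma> (P (\<tau> s)) i" by (intro gam_mono' P\<tau>_in)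
      qed
      show "continuous_on UNIV (\<lambda>t. \<gamma> (P (\<tau> t)) i)"
        by (rule continuous_on_compose2[OF gam_cont' continuous_on_compose2[OF P_cont \<tau>_cont]])
           (use \<tau>_in P\<tau>_in in auto)
      show "0 \<le> \<gamma> (P (\<tau> t)) i" "\<gamma> (P (\<tau> t)) i \<le> 1" for t using gam_range'[OF P\<tau>_in] by auto
      show "\<gamma> (P (\<tau> bot)) i = 0" using \<tau>_bot P0 gam_0[OF fin gd] by (simp add: \<gamma>_def)
      show "\<gamma> (P (\<tau> top)) i = 1" using \<tau>_top Pk gam_k[OF fin gd i] by (simp add: \<gamma>_def k_def)
    qed
  qed
  have good1: "good W \<rho>1" using \<rho>1_ML by (simp add: good_def)
  have close1: "close W \<delta> \<rho>1 \<rho>"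
    unfolding close_def
  proof (intro ballI allI)
    fix i t assume i: "i \<in> W"
    have "\<rho> i t = \<gamma> (S (\<tau> t)) i" unfolding S\<tau> \<gamma>_def gam_ssum[OF fin gd] using i by (simp add: pt_def)
    then have "\<bar>\<rho>1 i t - \<rho> i t\<bar> = \<bar>\<gamma> (P (\<tau> t)) i - \<gamma> (S (\<tau> t)) i\<bar>" using i by (simp add: \<rho>1_def)
    also have "\<dots> \<le> \<bar>P (\<tau> t) - S (\<tau> t)\<bar>"
      unfolding \<gamma>_def by (rule gam_lip[OF fin gd]) (use P\<tau>_in S_range[OF \<tau>_in] k_def in auto)
    also have "\<dots> \<le> \<delta>" by (rule P_close[OF \<tau>_in])
    finally show "\<bar>\<rho>1 i t - \<rho> i t\<bar> \<le> \<delta>" .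
  qed
  define F where "F = (\<lambda>v. (\<gamma> (P v))(x := \<Gamma> v x))"
  define G where "G = (\<lambda>u. (\<gamma> u)(x := \<Gamma> (Q u) x))"
  have lhs: "curve V' (\<rho>1(x:=g)) = F ` {0..k+1}"
  proof -
    have "pt V' (\<rho>1(x:=g)) t = F (\<tau> t)" for t
    proof
      fix i show "pt V' (\<rho>1(x:=g)) t i = F (\<tau> t) i"
        using g\<tau>[of t] gam_out[OF fin gd, of i] by (auto simp: pt_def F_def V'_def \<rho>1_def \<gamma>_def)
    qed
    then have "curve V' (\<rho>1(x:=g)) = F ` range \<tau>" unfolding curve_def by (auto simp: image_iff)
    then show ?thesis using \<tau>_range by simp
  qed
  have rhs: "curve V' (\<rho>'(x:=h')) = G ` {0..k}"
  proof -
    have "pt V' (\<rho>'(x:=h')) t = G (ssum W \<rho>' t)" for t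
    proof
      fix i show "pt V' (\<rho>'(x:=h')) t i = G (ssum W \<rho>' t) i"
        using fun_cong[OF pt_other[OF fin gd gd' cv, of t], of i] gam_out[OF fin gd, of i] xW
        by (auto simp: pt_def G_def V'_def h'_def \<gamma>_def)
    qed
    then have "curve V' (\<rho>'(x:=h')) = G ` range (ssum W \<rho>')" unfolding curve_def by (auto simp: image_iff)
    then show ?thesis using ssum_range[OF fin gd'] k_def by simp
  qed
  have "F ` {0..k+1} = G ` (P ` {0..k+1})"
    unfolding image_image by (intro image_cong) (auto simp: F_def G_def QP)
  then have "curve V' (\<rho>1(x:=g)) = curve V' (\<rho>'(x:=h'))" using lhs rhs P_img by simp
  then show ?thesis using good1 close1 hpML unfolding V'_def by blast
qed


lemma finite_fv: "finite (fv p)"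
  by (induction p) auto

lemma good_mono: "V \<subseteq> V' \<Longrightarrow> good V' \<rho> \<Longrightarrow> good V \<rho>"
  by (auto simp: good_def)

lemma curve_restrict:
  assumes "V \<subseteq> V'" "curve V' \<rho> = curve V' \<rho>'"
  shows "curve V \<rho> = curve V \<rho>'"
proof -
  define r where "r = (\<lambda>(c::nat \<Rightarrow> real) i. if i \<in> V then c i else 0)"
  have "curve V \<rho> = r ` curve V' \<rho>" "curve V \<rho>' = r ` curve V' \<rho>'"
    unfolding curve_def image_image using assms(1)
    by (auto intro!: image_cong simp: r_def pt_def fun_eq_iff)
  then show ?thesis using assms(2) by simp
qed

lemma eps_eq: "(\<And>e. e > 0 \<Longrightarrow> \<bar>a - b\<bar> \<le> e) \<Longrightarrow> (a::real) = b"
  by (metis abs_le_zero_iff dense_ge eq_iff_diff_eq_0)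

lemma quant_step:
  fixes \<rho> \<rho>' :: "nat \<Rightarrow> ('a::{linear_continuum_topology,order_bot,order_top} \<Rightarrow> real)"
  assumes IH: "\<forall>(\<rho>::nat \<Rightarrow> 'a \<Rightarrow> real) (\<rho>'::nat \<Rightarrow> 'a \<Rightarrow> real). good (fv p) \<rho> \<longrightarrow> good (fv p) \<rho>' \<longrightarrow>
                  curve (fv p) \<rho> = curve (fv p) \<rho>' \<longrightarrow> eval \<rho> p = eval \<rho>' p"
    and wfp: "wf p" and ne: "(M_L::('a \<Rightarrow> real) set) \<noteq> {}"
    and gd: "good (fv p - {x}) \<rho>" and gd': "good (fv p - {x}) \<rho>'"
    and cv: "curve (fv p - {x}) \<rho> = curve (fv p - {x}) \<rho>'"
    and g: "g \<in> M_L" and e: "\<epsilon> > 0"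
  shows "\<exists>g'\<in>M_L. \<bar>eval (\<rho>(x:=g)) p - eval (\<rho>'(x:=g')) p\<bar> \<le> \<epsilon>"
proof -
  define W where "W = fv p - {x}"
  have fin: "finite W" using finite_fv by (simp add: W_def)
  have xW: "x \<notin> W" by (simp add: W_def)
  have sub: "fv p \<subseteq> insert x W" by (auto simp: W_def)
  obtain d where d: "d > 0" "\<forall>(\<rho>::nat \<Rightarrow> 'a \<Rightarrow> real) \<rho>'. good (fv p) \<rho> \<longrightarrow> good (fv p) \<rho>' \<longrightarrow> close (fv p) d \<rho> \<rho>'
            \<longrightarrow> \<bar>eval \<rho> p - eval \<rho>' p\<bar> \<le> \<epsilon>"
    using eval_cont[OF wfp ne e] by blast
  show ?thesis
  proof (cases "W = {}")
    case True
    have "pt (fv p) (\<rho>(x:=g)) = pt (fv p) (\<rho>'(x:=g))"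
      using sub True by (auto simp: pt_def fun_eq_iff)
    then have "curve (fv p) (\<rho>(x:=g)) = curve (fv p) (\<rho>'(x:=g))" by (simp add: curve_def)
    moreover have "good (fv p) (\<rho>(x:=g))" "good (fv p) (\<rho>'(x:=g))"
      using good_mono[OF sub good_upd[OF gd[folded W_def] g]] good_mono[OF sub good_upd[OF gd'[folded W_def] g]]
      by auto
    ultimately have "eval (\<rho>(x:=g)) p = eval (\<rho>'(x:=g)) p" using IH[rule_format] by blast
    then show ?thesis using g e by force
  next
    case False
    obtain \<rho>1 h' where r1: "good W \<rho>1" "close W d \<rho>1 \<rho>" "h' \<in> M_L"
      "curve (insert x W) (\<rho>1(x:=g)) = curve (insert x W) (\<rho>'(x:=h'))"
      using back_forth[OF fin xW False gd[folded W_def] gd'[folded W_def] cv[folded W_def] g d(1)] by blast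
    have g1: "good (fv p) (\<rho>(x:=g))" using good_mono[OF sub good_upd[OF gd[folded W_def] g]] .
    have g2: "good (fv p) (\<rho>1(x:=g))" using good_mono[OF sub good_upd[OF r1(1) g]] .
    have g3: "good (fv p) (\<rho>'(x:=h'))" using good_mono[OF sub good_upd[OF gd'[folded W_def] r1(3)]] .
    have cl: "close (fv p) d (\<rho>(x:=g)) (\<rho>1(x:=g))"
      using r1(2) sub d(1) by (fastforce simp: close_def abs_minus_commute)
    have a: "\<bar>eval (\<rho>(x:=g)) p - eval (\<rho>1(x:=g)) p\<bar> \<le> \<epsilon>" using d(2) g1 g2 cl by blast
    have "curve (fv p) (\<rho>1(x:=g)) = curve (fv p) (\<rho>'(x:=h'))" by (rule curve_restrict[OF sub r1(4)])
    then have "eval (\<rho>1(x:=g)) p = eval (\<rho>'(x:=h')) p" using IH[rule_format, OF g2 g3] by blast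
    then show ?thesis using a r1(3) by auto
  qed
qed

lemma eval_curve:
  fixes p :: fml
  assumes "wf p" "(M_L::('a::{linear_continuum_topology,order_bot,order_top} \<Rightarrow> real) set) \<noteq> {}"
  shows "\<forall>(\<rho>::nat \<Rightarrow> 'a \<Rightarrow> real) (\<rho>'::nat \<Rightarrow> 'a \<Rightarrow> real). good (fv p) \<rho> \<longrightarrow> good (fv p) \<rho>' \<longrightarrow>
                  curve (fv p) \<rho> = curve (fv p) \<rho>' \<longrightarrow> eval \<rho> p = eval \<rho>' p"
  using assms(1)
proof (induction p)
  case (Pred \<alpha> i j)
  have a: "0 \<le> real_of_rat \<alpha>" "real_of_rat \<alpha> \<le> 2" using Pred(1)
    by (simp_all add: zero_le_of_rat_iff) (metis of_rat_1 of_rat_less_eq one_le_numeral order.trans)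
  show ?case
  proof (intro allI impI)
    fix \<rho> \<rho>' :: "nat \<Rightarrow> 'a \<Rightarrow> real"
    assume h: "good (fv (Pred \<alpha> i j)) \<rho>" "good (fv (Pred \<alpha> i j)) \<rho>'" "curve (fv (Pred \<alpha> i j)) \<rho> = curve (fv (Pred \<alpha> i j)) \<rho>'"
    have m: "\<rho> i \<in> M_L" "\<rho> j \<in> M_L" "\<rho>' i \<in> M_L" "\<rho>' j \<in> M_L" using h by (auto simp: good_def)
    obtain t where t: "\<rho> i t + \<rho> j t = real_of_rat \<alpha>" using phi_ex[OF m(1,2) a] by auto
    have "pt {i,j} \<rho> t \<in> curve {i,j} \<rho>'" using h(3) by (auto simp: curve_def)
    then obtain s where s: "pt {i,j} \<rho>' s = pt {i,j} \<rho> t" by (auto simp: curve_def)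
    have si: "\<rho>' i s = \<rho> i t" "\<rho>' j s = \<rho> j t"
      using fun_cong[OF s, of i] fun_cong[OF s, of j] by (auto simp: pt_def)
    show "eval \<rho> (Pred \<alpha> i j) = eval \<rho>' (Pred \<alpha> i j)"
      using phi_eq[OF m(1,2) t] phi_eq[OF m(3,4), of s] t si by simp
  qed
next
  case (Dist i j)
  show ?case
  proof (intro allI impI)
    fix \<rho> \<rho>' :: "nat \<Rightarrow> 'a \<Rightarrow> real"
    assume h: "good (fv (Dist i j)) \<rho>" "good (fv (Dist i j)) \<rho>'" "curve (fv (Dist i j)) \<rho> = curve (fv (Dist i j)) \<rho>'"
    define D where "D = (\<lambda>c::nat \<Rightarrow> real. \<bar>c i - c j\<bar>)"
    have "range (\<lambda>t. \<bar>\<sigma> i t - \<sigma> j t\<bar>) = D ` curve {i,j} \<sigma>" for \<sigma> :: "nat \<Rightarrow> 'a \<Rightarrow> real"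
      unfolding curve_def image_image by (auto simp: D_def pt_def)
    then show "eval \<rho> (Dist i j) = eval \<rho>' (Dist i j)" using h(3) by (simp add: supdist_def)
  qed
next
  case (Conn u ps)
  show ?case
  proof (intro allI impI)
    fix \<rho> \<rho>' :: "nat \<Rightarrow> 'a \<Rightarrow> real"
    assume h: "good (fv (Conn u ps)) \<rho>" "good (fv (Conn u ps)) \<rho>'" "curve (fv (Conn u ps)) \<rho> = curve (fv (Conn u ps)) \<rho>'"
    have "map (eval \<rho>) ps = map (eval \<rho>') ps"
    proof (rule map_cong[OF refl])
      fix q assume q: "q \<in> set ps"
      have sub: "fv q \<subseteq> fv (Conn u ps)" using q by auto
      have wq: "wf q" using Conn.prems q by simp
      show "eval \<rho> q = eval \<rho>' q"
        by (rule Conn.IH[OF q wq, rule_format, OF good_mono[OF sub h(1)] good_mono[OF sub h(2)] curve_restrict[OF sub h(3)]])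
    qed
    then show "eval \<rho> (Conn u ps) = eval \<rho>' (Conn u ps)" unfolding eval_Conn
      by (rule arg_cong[where f="\<lambda>xs. u (padv xs)"])
  qed
next
  case (FSup x p)
  have wfp: "wf p" using FSup by simp
  have IH: "\<forall>(\<rho>::nat \<Rightarrow> 'a \<Rightarrow> real) (\<rho>'::nat \<Rightarrow> 'a \<Rightarrow> real). good (fv p) \<rho> \<longrightarrow> good (fv p) \<rho>' \<longrightarrow>
                  curve (fv p) \<rho> = curve (fv p) \<rho>' \<longrightarrow> eval \<rho> p = eval \<rho>' p" by (rule FSup.IH[OF wfp])
  show ?case
  proof (intro allI impI)
    fix \<rho> \<rho>' :: "nat \<Rightarrow> 'a \<Rightarrow> real"
    assume h: "good (fv (FSup x p)) \<rho>" "good (fv (FSup x p)) \<rho>'" "curve (fv (FSup x p)) \<rho> = curve (fv (FSup x p)) \<rho>'"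
    have ra: "eval (\<rho>(x:=g)) p \<in> {0..1}" "eval (\<rho>'(x:=g)) p \<in> {0..1}" if "g \<in> M_L" for g
      using eval_range[OF wfp _ assms(2), of "\<rho>(x:=g)"] eval_range[OF wfp _ assms(2), of "\<rho>'(x:=g)"] h that
      by (auto simp: good_def)
    have "\<bar>(SUP g\<in>M_L. eval (\<rho>(x:=g)) p) - (SUP g\<in>M_L. eval (\<rho>'(x:=g)) p)\<bar> \<le> \<epsilon>" if e: "\<epsilon> > 0" for \<epsilon>
    proof (rule sup_inf_close(1)[OF assms(2) ra(1) ra(2)])
      show "\<exists>g'\<in>M_L. \<bar>eval (\<rho>(x:=g)) p - eval (\<rho>'(x:=g')) p\<bar> \<le> \<epsilon>" if "g \<in> M_L" for g
        using quant_step[OF IH wfp assms(2) _ _ _ that e] h by simp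
      show "\<exists>g\<in>M_L. \<bar>eval (\<rho>(x:=g)) p - eval (\<rho>'(x:=g')) p\<bar> \<le> \<epsilon>" if "g' \<in> M_L" for g'
        using quant_step[where \<rho>="\<rho>'" and \<rho>'="\<rho>", OF IH wfp assms(2) _ _ _ that e] h by (simp add: abs_minus_commute)
    qed
    then show "eval \<rho> (FSup x p) = eval \<rho>' (FSup x p)" by (simp add: eps_eq)
  qed
next
  case (FInf x p)
  have wfp: "wf p" using FInf by simp
  have IH: "\<forall>(\<rho>::nat \<Rightarrow> 'a \<Rightarrow> real) (\<rho>'::nat \<Rightarrow> 'a \<Rightarrow> real). good (fv p) \<rho> \<longrightarrow> good (fv p) \<rho>' \<longrightarrow>
                  curve (fv p) \<rho> = curve (fv p) \<rho>' \<longrightarrow> eval \<rho> p = eval \<rho>' p" by (rule FInf.IH[OF wfp])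
  show ?case
  proof (intro allI impI)
    fix \<rho> \<rho>' :: "nat \<Rightarrow> 'a \<Rightarrow> real"
    assume h: "good (fv (FInf x p)) \<rho>" "good (fv (FInf x p)) \<rho>'" "curve (fv (FInf x p)) \<rho> = curve (fv (FInf x p)) \<rho>'"
    have ra: "eval (\<rho>(x:=g)) p \<in> {0..1}" "eval (\<rho>'(x:=g)) p \<in> {0..1}" if "g \<in> M_L" for g
      using eval_range[OF wfp _ assms(2), of "\<rho>(x:=g)"] eval_range[OF wfp _ assms(2), of "\<rho>'(x:=g)"] h that
      by (auto simp: good_def)
    have "\<bar>(INF g\<in>M_L. eval (\<rho>(x:=g)) p) - (INF g\<in>M_L. eval (\<rho>'(x:=g)) p)\<bar> \<le> \<epsilon>" if e: "\<epsilon> > 0" for \<epsilon>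
    proof (rule sup_inf_close(2)[OF assms(2) ra(1) ra(2)])
      show "\<exists>g'\<in>M_L. \<bar>eval (\<rho>(x:=g)) p - eval (\<rho>'(x:=g')) p\<bar> \<le> \<epsilon>" if "g \<in> M_L" for g
        using quant_step[OF IH wfp assms(2) _ _ _ that e] h by simp
      show "\<exists>g\<in>M_L. \<bar>eval (\<rho>(x:=g)) p - eval (\<rho>'(x:=g')) p\<bar> \<le> \<epsilon>" if "g' \<in> M_L" for g'
        using quant_step[where \<rho>="\<rho>'" and \<rho>'="\<rho>", OF IH wfp assms(2) _ _ _ that e] h by (simp add: abs_minus_commute)
    qed
    then show "eval \<rho> (FInf x p) = eval \<rho>' (FInf x p)" by (simp add: eps_eq)
  qed
qed


definition penv :: "(nat \<Rightarrow> rat) \<Rightarrow> (nat \<Rightarrow> real) \<Rightarrow> nat \<Rightarrow> real" where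
  "penv a v i = max (real_of_rat (a i) - v (2*i)) (v (2*i+1) - real_of_rat (a i))"

definition Uf :: "nat \<Rightarrow> (nat \<Rightarrow> rat) \<Rightarrow> (nat \<Rightarrow> real) \<Rightarrow> real" where
  "Uf m a v = foldr (\<lambda>i acc. max acc (penv a v i)) [0..<m] 0"

definition psl :: "nat \<Rightarrow> (nat \<Rightarrow> rat) \<Rightarrow> fml list" where
  "psl m a = map (\<lambda>k. if even k then Pred (a (k div 2)) (k div 2) m else Pred 1 (k div 2) m) [0..<2*m]"

definition Phi :: "nat \<Rightarrow> (nat \<Rightarrow> rat) \<Rightarrow> fml" where
  "Phi m a = FInf m (Conn (Uf m a) (psl m a))"

definition pen :: "(nat \<Rightarrow> 'a \<Rightarrow> real) \<Rightarrow> ('a \<Rightarrow> real) \<Rightarrow> (nat \<Rightarrow> rat) \<Rightarrow> nat \<Rightarrow> real" where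
  "pen \<rho> h a i = max (real_of_rat (a i) - phi (real_of_rat (a i)) (\<rho> i) h) (phi 1 (\<rho> i) h - real_of_rat (a i))"

definition Fm :: "nat \<Rightarrow> (nat \<Rightarrow> 'a \<Rightarrow> real) \<Rightarrow> ('a \<Rightarrow> real) \<Rightarrow> (nat \<Rightarrow> rat) \<Rightarrow> real" where
  "Fm m \<rho> h a = foldr (\<lambda>i acc. max acc (pen \<rho> h a i)) [0..<m] 0"

lemma foldr_max_le: "foldr (\<lambda>i acc. max acc (f i)) l (0::real) \<le> B \<longleftrightarrow> 0 \<le> B \<and> (\<forall>i\<in>set l. f i \<le> B)"
  by (induction l) auto

lemma foldr_max_ge: "0 \<le> foldr (\<lambda>i acc. max acc (f i)) l (0::real)"
  "i \<in> set l \<Longrightarrow> f i \<le> foldr (\<lambda>i acc. max acc (f i)) l (0::real)"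
  using foldr_max_le[of f l "foldr (\<lambda>i acc. max acc (f i)) l 0"] by auto

lemma foldr_cong': "(\<And>i. i \<in> set l \<Longrightarrow> f i = g i) \<Longrightarrow>
   foldr (\<lambda>i acc. max acc (f i)) l (0::real) = foldr (\<lambda>i acc. max acc (g i)) l 0"
  by (induction l) auto

lemma foldr_cont: "(\<And>i. i \<in> set l \<Longrightarrow> continuous_on S (\<lambda>v. f v i)) \<Longrightarrow>
   continuous_on S (\<lambda>v. foldr (\<lambda>i acc. max acc (f v i)) l (0::real))"
  by (induction l) (auto intro!: continuous_intros)

lemma coord_cont: "continuous_on S (\<lambda>v::nat \<Rightarrow> real. v k)"
  by (rule continuous_on_subset[OF continuous_on_product_coordinates]) simp

lemma wf_Phi:
  assumes "\<And>i. i < m \<Longrightarrow> 0 \<le> a i \<and> a i \<le> 1"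
  shows "wf (Phi m a)"
proof -
  have c: "continuous_on cube (Uf m a)"
    unfolding Uf_def penv_def by (intro foldr_cont continuous_intros coord_cont)
  have r: "Uf m a v \<in> {0..1}" if "v \<in> cube" for v
  proof -
    have "penv a v i \<le> 1" if "i \<in> set [0..<m]" for i
    proof -
      have a1: "0 \<le> real_of_rat (a i)" "real_of_rat (a i) \<le> 1" using assms[of i] that
        by (auto simp: zero_le_of_rat_iff)
      have v1: "0 \<le> v (2*i)" "v (2*i) \<le> 1" "0 \<le> v (2*i+1)" "v (2*i+1) \<le> 1" using \<open>v \<in> cube\<close> by (auto simp: cube_def)
      show ?thesis unfolding penv_def using a1 v1 by (intro max.boundedI) linarith+
    qed
    then show ?thesis unfolding Uf_def using foldr_max_le foldr_max_ge(1) by auto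
  qed
  have w: "\<forall>q\<in>set (psl m a). wf q"
    using assms by (auto simp: psl_def)
  show ?thesis unfolding Phi_def using c r w by auto
qed

lemma fv_Phi: "fv (Phi m a) \<subseteq> {..<m}"
proof -
  have "fv q \<subseteq> insert m {..<m}" if "q \<in> set (psl m a)" for q
    using that by (auto simp: psl_def less_mult_imp_div_less mult.commute)
  then show ?thesis unfolding Phi_def by auto
qed

lemma eval_Phi:
  "eval \<rho> (Phi m a) = (INF h\<in>M_L. Fm m \<rho> h a)"
proof -
  have "eval (\<rho>(m:=h)) (Conn (Uf m a) (psl m a)) = Fm m \<rho> h a" for h
  proof -
    have "penv a (padv (map (eval (\<rho>(m:=h))) (psl m a))) i = pen \<rho> h a i" if "i \<in> set [0..<m]" for i
    proof -
      have i: "i < m" using that by auto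
      have "padv (map (eval (\<rho>(m:=h))) (psl m a)) (2*i) = phi (real_of_rat (a i)) (\<rho> i) h"
        using i by (simp add: padv_def psl_def)
      moreover have "padv (map (eval (\<rho>(m:=h))) (psl m a)) (2*i+1) = phi 1 (\<rho> i) h"
        using i by (simp add: padv_def psl_def)
      ultimately show ?thesis by (simp add: penv_def pen_def)
    qed
    then show ?thesis unfolding eval_Conn Uf_def Fm_def by (rule foldr_cong')
  qed
  then show ?thesis unfolding Phi_def by simp
qed


lemma rat01: "0 \<le> (a::rat) \<Longrightarrow> a \<le> 1 \<Longrightarrow> 0 \<le> real_of_rat a \<and> real_of_rat a \<le> 1 \<and> real_of_rat a \<le> 2"
  by (auto simp: zero_le_of_rat_iff) (metis of_rat_1 of_rat_less_eq one_le_numeral order.trans)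

lemma ssum_le_coord:
  fixes \<rho> :: "nat \<Rightarrow> ('a::{linear_continuum_topology,order_bot,order_top} \<Rightarrow> real)"
  assumes "good {..<m} \<rho>" "i < m"
  shows "ssum {..<m} \<rho> t \<le> \<rho> i t + (real m - 1)"
proof -
  have "ssum {..<m} \<rho> t = \<rho> i t + (\<Sum>j\<in>{..<m} - {i}. \<rho> j t)"
    unfolding ssum_def using assms(2) by (simp add: sum.remove)
  moreover have "(\<Sum>j\<in>{..<m} - {i}. \<rho> j t) \<le> real (card ({..<m} - {i})) * 1"
    by (rule sum_bounded_above) (use assms(1) mlx_D(4) in \<open>auto simp: good_def\<close>)
  moreover have "real (card ({..<m} - {i})) = real m - 1" using assms(2) by (simp add: of_nat_diff)
  ultimately show ?thesis by simp
qed

lemma Phi_upper: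
  fixes \<rho> :: "nat \<Rightarrow> ('a::{linear_continuum_topology,order_bot,order_top} \<Rightarrow> real)"
  assumes m1: "m \<ge> 1" and gd: "good {..<m} \<rho>" and a01: "\<And>i. i < m \<Longrightarrow> 0 \<le> a i \<and> a i \<le> 1"
    and cl: "\<And>i. i < m \<Longrightarrow> \<bar>\<rho> i s - real_of_rat (a i)\<bar> \<le> \<eta>"
    and th: "0 < \<theta>" "\<theta> \<le> 1"
  shows "\<exists>h\<in>M_L. Fm m \<rho> h a \<le> \<eta> + \<theta>"
proof -
  have fin: "finite {..<m}" by simp
  define \<tau> where "\<tau> = ssum {..<m} \<rho>"
  define cc where "cc = min (\<tau> s) (real m - \<theta>)"
  define h where "h = (\<lambda>t. min 1 (max 0 ((\<tau> t - cc) / \<theta>)))"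
  have \<tau>_mono: "t \<le> t' \<Longrightarrow> \<tau> t \<le> \<tau> t'" for t t' unfolding \<tau>_def by (rule ssum_mono[OF fin gd])
  have \<tau>_range: "\<tau> t \<in> {0..real m}" for t using ssum_range[OF fin gd] by (auto simp: \<tau>_def)
  have \<tau>_bot: "\<tau> bot = 0" unfolding \<tau>_def by (rule ssum_bot[OF fin gd])
  have \<tau>_top: "\<tau> top = real m" unfolding \<tau>_def using ssum_top[OF fin gd] by simp
  have cc0: "0 \<le> cc" using \<tau>_range[of s] m1 th by (auto simp: cc_def)
  have ccm: "cc \<le> real m - \<theta>" "cc \<le> \<tau> s" by (auto simp: cc_def)
  have hML: "h \<in> M_L"
  proof (rule mlx_I)
    show "mono h" unfolding h_def
    proof (rule monoI)
      fix x y :: 'a assume "x \<le> y"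
      then have "(\<tau> x - cc) / \<theta> \<le> (\<tau> y - cc) / \<theta>" using \<tau>_mono th by (intro divide_right_mono) auto
      then show "min 1 (max 0 ((\<tau> x - cc) / \<theta>)) \<le> min 1 (max 0 ((\<tau> y - cc) / \<theta>))"
        by (simp add: min_def max_def)
    qed
    show "continuous_on UNIV h" unfolding h_def \<tau>_def using th
      by (intro continuous_intros ssum_cont[OF fin gd]) auto
    show "0 \<le> h t" "h t \<le> 1" for t by (auto simp: h_def)
    show "h bot = 0" using cc0 th by (simp add: h_def \<tau>_bot divide_nonpos_pos)
    have "1 \<le> (real m - cc) / \<theta>" using ccm th by (simp add: le_divide_eq)
    then show "h top = 1" by (simp add: h_def \<tau>_top)
  qed
  have pen_le: "pen \<rho> h a i \<le> \<eta> + \<theta>" if i: "i < m" for i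
  proof -
    have fi: "\<rho> i \<in> M_L" using gd i by (auto simp: good_def)
    have ai: "0 \<le> real_of_rat (a i)" "real_of_rat (a i) \<le> 1" "real_of_rat (a i) \<le> 2" using rat01 a01[OF i] by auto
    have eta0: "0 \<le> \<eta>" using cl[OF i] by linarith
    obtain t1 where t1: "\<rho> i t1 + h t1 = real_of_rat (a i)" using phi_ex[OF fi hML ai(1,3)] by auto
    obtain t2 where t2: "\<rho> i t2 + h t2 = 1" using phi_ex[OF fi hML, of 1] by auto
    have A: "real_of_rat (a i) - \<rho> i t1 \<le> \<eta> + \<theta>"
    proof (cases "s \<le> t1")
      case True
      then have "\<rho> i s \<le> \<rho> i t1" using mlx_D(1)[OF fi] by (simp add: mono_def)
      then show ?thesis using cl[OF i] th by linarith
    next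
      case False
      then have "t1 \<le> s" by simp
      show ?thesis
      proof (cases "h t1 = 0")
        case True then show ?thesis using t1 eta0 th by linarith
      next
        case False
        then have "0 < (\<tau> t1 - cc) / \<theta>"
          by (cases "(\<tau> t1 - cc) / \<theta> \<le> 0") (auto simp: h_def)
        then have "cc < \<tau> t1" using th by (simp add: zero_less_divide_iff)
        moreover have "\<tau> t1 \<le> \<tau> s" using \<tau>_mono[OF \<open>t1 \<le> s\<close>] .
        ultimately have "cc = real m - \<theta>" by (auto simp: cc_def min_def split: if_splits)
        then have "real m - \<theta> < \<tau> t1" using \<open>cc < \<tau> t1\<close> by simp
        moreover have "\<tau> t1 \<le> \<rho> i t1 + (real m - 1)" unfolding \<tau>_def by (rule ssum_le_coord[OF gd i])
        ultimately show ?thesis using ai th eta0 by linarith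
      qed
    qed
    have B: "\<rho> i t2 - real_of_rat (a i) \<le> \<eta> + \<theta>"
    proof (cases "t2 \<le> s")
      case True
      then have "\<rho> i t2 \<le> \<rho> i s" using mlx_D(1)[OF fi] by (simp add: mono_def)
      then show ?thesis using cl[OF i] th by linarith
    next
      case False
      then have "s \<le> t2" by simp
      show ?thesis
      proof (cases "h t2 = 1")
        case True then show ?thesis using t2 ai eta0 th by linarith
      next
        case False
        then have "(\<tau> t2 - cc) / \<theta> \<le> h t2" unfolding h_def by (auto simp: min_def max_def split: if_splits)
        then have "\<tau> t2 - cc \<le> \<theta> * h t2" using th by (simp add: divide_le_eq mult.commute)
        moreover have "h t2 \<le> 1" by (simp add: h_def)
        ultimately have "\<tau> t2 \<le> \<tau> s + \<theta>" using ccm th by (smt (verit) mult_left_le)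
        moreover have "\<rho> i t2 - \<rho> i s \<le> \<tau> t2 - \<tau> s" unfolding \<tau>_def by (rule coord_le(2)[OF fin gd _ \<open>s \<le> t2\<close>]) (use i in simp)
        ultimately show ?thesis using cl[OF i] by linarith
      qed
    qed
    show ?thesis unfolding pen_def using phi_eq[OF fi hML t1] phi_eq[OF fi hML t2] A B by simp
  qed
  have "Fm m \<rho> h a \<le> \<eta> + \<theta>" unfolding Fm_def foldr_max_le
  proof (intro conjI ballI)
    have "\<bar>\<rho> 0 s - real_of_rat (a 0)\<bar> \<le> \<eta>" using cl[of 0] m1 by simp
    then show "0 \<le> \<eta> + \<theta>" using th by linarith
  qed (use pen_le in auto)
  then show ?thesis using hML by blast
qed

lemma Phi_lower:
  fixes \<rho> :: "nat \<Rightarrow> ('a::{linear_continuum_topology,order_bot,order_top} \<Rightarrow> real)"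
  assumes gd: "good {..<m} \<rho>" and a01: "\<And>i. i < m \<Longrightarrow> 0 \<le> a i \<and> a i \<le> 1"
    and hML: "h \<in> M_L" and e: "0 < \<eta>" "\<eta> \<le> 1" and F: "Fm m \<rho> h a < \<eta>"
  shows "\<exists>s. \<forall>i<m. \<bar>\<rho> i s - real_of_rat (a i)\<bar> \<le> 2 * \<eta>"
proof -
  obtain s where s: "h s = \<eta>" using IVT_L[OF mlx_D(2)[OF hML], of \<eta>] mlx_bot[OF hML] mlx_top[OF hML] e by auto
  have "\<bar>\<rho> i s - real_of_rat (a i)\<bar> \<le> 2 * \<eta>" if i: "i < m" for i
  proof -
    have fi: "\<rho> i \<in> M_L" using gd i by (auto simp: good_def)
    have ai: "0 \<le> real_of_rat (a i)" "real_of_rat (a i) \<le> 1" "real_of_rat (a i) \<le> 2" using rat01 a01[OF i] by auto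
    have pl: "pen \<rho> h a i < \<eta>" using foldr_max_ge(2)[of i "[0..<m]" "pen \<rho> h a"] F i by (simp add: Fm_def)
    obtain t1 where t1: "\<rho> i t1 + h t1 = real_of_rat (a i)" using phi_ex[OF fi hML ai(1,3)] by auto
    obtain t2 where t2: "\<rho> i t2 + h t2 = 1" using phi_ex[OF fi hML, of 1] by auto
    have p1: "real_of_rat (a i) - \<rho> i t1 < \<eta>" "\<rho> i t2 - real_of_rat (a i) < \<eta>"
      using pl phi_eq[OF fi hML t1] phi_eq[OF fi hML t2] by (auto simp: pen_def)
    have L: "real_of_rat (a i) - \<eta> < \<rho> i s"
    proof -
      have "h t1 < h s" using t1 p1(1) s by linarith
      then have "t1 \<le> s" using mlx_D(1)[OF hML] by (metis linorder_le_cases monoD not_le)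
      then have "\<rho> i t1 \<le> \<rho> i s" using mlx_D(1)[OF fi] by (simp add: mono_def)
      then show ?thesis using p1(1) by linarith
    qed
    have U: "\<rho> i s \<le> real_of_rat (a i) + 2 * \<eta>"
    proof (cases "\<eta> \<le> 1 - real_of_rat (a i) - \<eta>")
      case True
      have "h s < h t2" using t2 p1(2) s True by linarith
      then have "s \<le> t2" using mlx_D(1)[OF hML] by (metis linorder_le_cases monoD not_le)
      then have "\<rho> i s \<le> \<rho> i t2" using mlx_D(1)[OF fi] by (simp add: mono_def)
      then show ?thesis using p1(2) e by linarith
    next
      case False
      then show ?thesis using mlx_D(4)[OF fi, of s] by linarith
    qed
    show ?thesis using L U e by (simp add: abs_le_iff)
  qed
  then show ?thesis by blast
qed


lemma eps_small:
  assumes "\<And>\<eta>. 0 < \<eta> \<Longrightarrow> \<eta> \<le> 1/6 \<Longrightarrow> \<bar>x\<bar> \<le> K * \<eta>" "(K::real) \<ge> 0"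
  shows "x = 0"
proof (rule ccontr)
  assume "x \<noteq> 0"
  define \<eta> where "\<eta> = min (1/6) (\<bar>x\<bar> / (2 * (K + 1)))"
  have "0 < \<bar>x\<bar> / (2 * (K + 1))" using \<open>x \<noteq> 0\<close> assms(2) by (intro divide_pos_pos) auto
  then have p: "0 < \<eta>" "\<eta> \<le> 1/6" unfolding \<eta>_def by (simp_all only: min.cobounded1)
  have "K * \<eta> \<le> K * (\<bar>x\<bar> / (2 * (K + 1)))" using assms(2) by (intro mult_left_mono) (auto simp: \<eta>_def)
  also have "\<dots> < \<bar>x\<bar>" using \<open>x \<noteq> 0\<close> assms(2)
    by (simp add: field_simps) (smt (verit) mult_nonneg_nonneg zero_less_abs_iff)
  finally show False using assms(1)[OF p] by linarith
qed

lemma good_asg: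
  assumes "set xs \<subseteq> M_L" shows "good {..<length xs} (asg xs)"
  using assms by (auto simp: good_def asg_def)

lemma match_pt:
  fixes \<rho> \<rho>' :: "nat \<Rightarrow> ('a::{linear_continuum_topology,order_bot,order_top} \<Rightarrow> real)"
  assumes "finite V" "good V \<rho>" "good V \<rho>'" "curve V \<rho> = curve V \<rho>'" "ssum V \<rho>' t' = ssum V \<rho> t"
  shows "pt V \<rho>' t' = pt V \<rho> t"
  using pt_other[OF assms(1,2,3,4), of t'] gam_ssum[OF assms(1,2), of t] assms(5) by simp

lemma tp_curve_sub:
  fixes xs ys :: "('a::{linear_continuum_topology,order_bot,order_top} \<Rightarrow> real) list"
  assumes tp: "same_tp xs ys" and sx: "set xs \<subseteq> M_L" and sy: "set ys \<subseteq> M_L"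
    and len: "length xs = m" and m1: "m \<ge> 1"
  shows "curve {..<m} (asg xs) \<subseteq> curve {..<m} (asg ys)"
proof
  fix c assume "c \<in> curve {..<m} (asg xs)"
  then obtain s where cs: "c = pt {..<m} (asg xs) s" by (auto simp: curve_def)
  define \<rho> where "\<rho> = asg xs"
  define \<rho>' where "\<rho>' = asg ys"
  have leny: "length ys = m" using tp len by (simp add: same_tp_def)
  have gd: "good {..<m} \<rho>" using good_asg[OF sx] len by (simp add: \<rho>_def)
  have gd': "good {..<m} \<rho>'" using good_asg[OF sy] leny by (simp add: \<rho>'_def)
  have fin: "finite {..<m}" by simp
  have "\<rho> 0 \<in> M_L" using gd m1 by (auto simp: good_def)
  then have ne: "(M_L::('a \<Rightarrow> real) set) \<noteq> {}" by auto
  have ci: "c i = \<rho> i s" if "i < m" for i using that by (simp add: cs pt_def \<rho>_def)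
  have c01: "0 \<le> c i" "c i \<le> 1" if "i < m" for i
  proof -
    have "\<rho> i \<in> M_L" using gd that by (auto simp: good_def)
    then show "0 \<le> c i" "c i \<le> 1" using ci[OF that] mlx_D(3,4) by auto
  qed
  have key: "\<exists>s'. \<forall>i<m. \<bar>\<rho>' i s' - c i\<bar> \<le> 7 * \<eta>" if e: "0 < \<eta>" "\<eta> \<le> 1/6" for \<eta>
  proof -
    define N :: nat where "N = nat \<lceil>1/\<eta>\<rceil>"
    have N1: "real N \<ge> 1/\<eta>" using e by (simp add: N_def)
    have Npos: "real N > 0" using N1 e by (smt (verit) divide_pos_pos)
    have invN: "1 / real N \<le> \<eta>" using N1 e Npos by (simp add: divide_le_eq mult.commute le_divide_eq)
    define a :: "nat \<Rightarrow> rat" where "a = (\<lambda>i. of_int \<lfloor>c i * real N\<rfloor> / of_nat N)"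
    have ar: "real_of_rat (a i) = of_int \<lfloor>c i * real N\<rfloor> / real N" for i
      by (simp add: a_def of_rat_divide)
    have a_close: "\<bar>real_of_rat (a i) - c i\<bar> \<le> \<eta>" if "i < m" for i
    proof -
      have "of_int \<lfloor>c i * real N\<rfloor> \<le> c i * real N" "c i * real N < of_int \<lfloor>c i * real N\<rfloor> + 1"
        by linarith+
      then have "real_of_rat (a i) \<le> c i" "c i < real_of_rat (a i) + 1 / real N"
        using Npos unfolding ar by (simp_all add: divide_le_eq field_simps)
      then show ?thesis using invN by (simp add: abs_le_iff)
    qed
    have a01: "0 \<le> a i \<and> a i \<le> 1" if "i < m" for i
    proof -
      have "0 \<le> c i * real N" using c01[OF that] Npos by simp
      then have "(0::real) \<le> of_int \<lfloor>c i * real N\<rfloor>" by simp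
      moreover have "c i * real N \<le> real N" using c01[OF that] Npos by (intro mult_left_le_one_le) auto
      then have "(of_int \<lfloor>c i * real N\<rfloor> :: real) \<le> real N" using of_int_floor_le[of "c i * real N"] by linarith
      ultimately have "0 \<le> real_of_rat (a i)" "real_of_rat (a i) \<le> 1" using Npos unfolding ar by auto
      then show ?thesis by (simp add: zero_le_of_rat_iff)
    qed
    have wfP: "wf (Phi m a)" by (rule wf_Phi) (use a01 in auto)
    have eq: "eval \<rho> (Phi m a) = eval \<rho>' (Phi m a)"
      using tp wfP fv_Phi[of m a] len by (simp add: same_tp_def \<rho>_def \<rho>'_def)
    obtain h where h: "h \<in> M_L" "Fm m \<rho> h a \<le> \<eta> + \<eta>"
      using Phi_upper[OF m1 gd, of a s \<eta> \<eta>] a01 a_close ci e by (auto simp: abs_minus_commute)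
    have bdd: "bdd_below ((\<lambda>h. Fm m \<sigma> h a) ` M_L)" for \<sigma> :: "nat \<Rightarrow> 'a \<Rightarrow> real"
      by (rule bdd_belowI[of _ 0]) (auto simp: Fm_def foldr_max_ge)
    have "eval \<rho> (Phi m a) \<le> \<eta> + \<eta>" unfolding eval_Phi
      by (rule order.trans[OF cINF_lower[OF bdd[of \<rho>] h(1)] h(2)])
    then have "(INF h\<in>M_L. Fm m \<rho>' h a) < 3 * \<eta>" using eq e unfolding eval_Phi by simp
    then obtain h' where h': "h' \<in> M_L" "Fm m \<rho>' h' a < 3 * \<eta>" using cINF_less_iff[OF ne bdd] by blast
    obtain s' where s': "\<forall>i<m. \<bar>\<rho>' i s' - real_of_rat (a i)\<bar> \<le> 2 * (3 * \<eta>)"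
      using Phi_lower[OF gd' _ h'(1) _ _ h'(2)] a01 e by auto
    show ?thesis using s' a_close by (intro exI[of _ s']) (smt (verit))
  qed
  define u where "u = ssum {..<m} \<rho> s"
  have "u \<in> {0..real m}" using ssum_range[OF fin gd] by (auto simp: u_def)
  then obtain s0 where s0: "ssum {..<m} \<rho>' s0 = u" using ssum_ex[OF fin gd'] by auto
  have "\<rho>' i s0 = c i" if i: "i < m" for i
  proof -
    have "\<rho>' i s0 - c i = 0"
    proof (rule eps_small[of _ "7 * (real m + 1)"])
      fix \<eta> :: real assume e: "0 < \<eta>" "\<eta> \<le> 1/6"
      obtain s' where s': "\<forall>i<m. \<bar>\<rho>' i s' - c i\<bar> \<le> 7 * \<eta>" using key[OF e] by auto
      have "\<bar>ssum {..<m} \<rho>' s' - u\<bar> = \<bar>\<Sum>j<m. \<rho>' j s' - c j\<bar>"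
        by (simp add: u_def ssum_def sum_subtractf ci)
      also have "\<dots> \<le> (\<Sum>j<m. \<bar>\<rho>' j s' - c j\<bar>)" by (rule sum_abs)
      also have "\<dots> \<le> real (card {..<m}) * (7 * \<eta>)" by (rule sum_bounded_above) (use s' in auto)
      finally have d1: "\<bar>ssum {..<m} \<rho>' s' - u\<bar> \<le> real m * (7 * \<eta>)" by simp
      have "\<bar>\<rho>' i s0 - \<rho>' i s'\<bar> \<le> \<bar>ssum {..<m} \<rho>' s0 - ssum {..<m} \<rho>' s'\<bar>"
        by (rule coord_abs[OF fin gd']) (use i in simp)
      then show "\<bar>\<rho>' i s0 - c i\<bar> \<le> 7 * (real m + 1) * \<eta>"
        using d1 s0 s'[rule_format, OF i] by (simp add: algebra_simps)
    qed simp
    then show ?thesis by simp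
  qed
  then have "pt {..<m} \<rho>' s0 = c" by (auto simp: pt_def cs fun_eq_iff)
  then show "c \<in> curve {..<m} (asg ys)" by (auto simp: curve_def \<rho>'_def)
qed

lemma tp_curve:
  fixes xs ys :: "('a::{linear_continuum_topology,order_bot,order_top} \<Rightarrow> real) list"
  assumes tp: "same_tp xs ys" and sx: "set xs \<subseteq> M_L" and sy: "set ys \<subseteq> M_L"
    and len: "length xs = m" and m1: "m \<ge> 1"
  shows "curve {..<m} (asg xs) = curve {..<m} (asg ys)"
proof
  show "curve {..<m} (asg xs) \<subseteq> curve {..<m} (asg ys)" by (rule tp_curve_sub[OF assms])
  have "same_tp ys xs" using tp by (auto simp: same_tp_def)
  moreover have "length ys = m" using tp len by (simp add: same_tp_def)
  ultimately show "curve {..<m} (asg ys) \<subseteq> curve {..<m} (asg xs)" by (rule tp_curve_sub[OF _ sy sx _ m1])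
qed


lemma avg_ssum:
  assumes "length xs = n"
  shows "avg xs t = ssum {..<n} (asg xs) t / real n"
proof -
  have "(\<Sum>f\<leftarrow>xs. f t) = (\<Sum>i = 0..<length xs. map (\<lambda>f. f t) xs ! i)"
    by (subst sum_list_sum_nth) simp
  also have "\<dots> = ssum {..<n} (asg xs) t"
    using assms by (simp add: ssum_def asg_def atLeast0LessThan)
  finally show ?thesis using assms by (simp add: avg_def)
qed

lemma avg_ML:
  fixes xs :: "('a::{linear_continuum_topology,order_bot,order_top} \<Rightarrow> real) list"
  assumes "n \<ge> 1" "length xs = n" "set xs \<subseteq> M_L"
  shows "avg xs \<in> M_L"
proof -
  have fin: "finite {..<n}" by simp
  have gd: "good {..<n} (asg xs)" using good_asg[OF assms(3)] assms(2) by simp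
  have e: "avg xs = (\<lambda>t. ssum {..<n} (asg xs) t / real n)" using avg_ssum[OF assms(2)] by auto
  have np: "real n > 0" using assms(1) by simp
  have r: "ssum {..<n} (asg xs) t \<in> {0..real n}" for t using ssum_range[OF fin gd] by auto
  show ?thesis unfolding e
  proof (rule mlx_I)
    show "mono (\<lambda>t. ssum {..<n} (asg xs) t / real n)"
      by (rule monoI) (use ssum_mono[OF fin gd] np in \<open>auto intro: divide_right_mono\<close>)
    show "continuous_on UNIV (\<lambda>t. ssum {..<n} (asg xs) t / real n)"
      by (intro continuous_intros ssum_cont[OF fin gd]) (use np in auto)
    show "0 \<le> ssum {..<n} (asg xs) t / real n" "ssum {..<n} (asg xs) t / real n \<le> 1" for t
      using r[of t] np by auto
    show "ssum {..<n} (asg xs) bot / real n = 0" by (simp add: ssum_bot[OF fin gd])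
    show "ssum {..<n} (asg xs) top / real n = 1" using np by (simp add: ssum_top[OF fin gd])
  qed
qed

lemma asg_append:
  assumes "length fs = n" "length gs = n" "i < n + n"
  shows "asg (fs @ gs) i = (if i < n then asg fs i else asg gs (i - n))"
  using assms by (auto simp: asg_def nth_append)

lemma joint_sub:
  fixes fs gs fs' gs' :: "('a::{linear_continuum_topology,order_bot,order_top} \<Rightarrow> real) list"
  assumes n1: "n \<ge> 1"
    and l: "length fs = n" "length gs = n" "length fs' = n" "length gs' = n"
    and s: "set fs \<subseteq> M_L" "set gs \<subseteq> M_L" "set fs' \<subseteq> M_L" "set gs' \<subseteq> M_L"
    and Cf: "curve {..<n} (asg fs) = curve {..<n} (asg fs')"
    and Cg: "curve {..<n} (asg gs) = curve {..<n} (asg gs')"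
    and Ca: "curve {..<2} (asg [avg fs, avg gs]) = curve {..<2} (asg [avg fs', avg gs'])"
  shows "curve {..<n+n} (asg (fs @ gs)) \<subseteq> curve {..<n+n} (asg (fs' @ gs'))"
proof
  fix c assume "c \<in> curve {..<n+n} (asg (fs @ gs))"
  then obtain t where c: "c = pt {..<n+n} (asg (fs @ gs)) t" by (auto simp: curve_def)
  have "pt {..<2} (asg [avg fs, avg gs]) t \<in> curve {..<2} (asg [avg fs', avg gs'])"
    using Ca by (auto simp: curve_def)
  then obtain t' where t': "pt {..<2} (asg [avg fs', avg gs']) t' = pt {..<2} (asg [avg fs, avg gs]) t"
    by (auto simp: curve_def)
  have av: "avg fs' t' = avg fs t" "avg gs' t' = avg gs t"
    using fun_cong[OF t', of 0] fun_cong[OF t', of 1] by (auto simp: pt_def asg_def)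
  have np: "real n > 0" using n1 by simp
  have fin: "finite {..<n}" by simp
  have gdf: "good {..<n} (asg fs)" "good {..<n} (asg fs')" "good {..<n} (asg gs)" "good {..<n} (asg gs')"
    using good_asg[OF s(1)] good_asg[OF s(3)] good_asg[OF s(2)] good_asg[OF s(4)] l by auto
  have "ssum {..<n} (asg fs') t' = ssum {..<n} (asg fs) t"
    using av(1) avg_ssum[OF l(3), of t'] avg_ssum[OF l(1), of t] np by simp
  then have pf: "pt {..<n} (asg fs') t' = pt {..<n} (asg fs) t"
    by (rule match_pt[OF fin gdf(1,2) Cf])
  have "ssum {..<n} (asg gs') t' = ssum {..<n} (asg gs) t"
    using av(2) avg_ssum[OF l(4), of t'] avg_ssum[OF l(2), of t] np by simp
  then have pg: "pt {..<n} (asg gs') t' = pt {..<n} (asg gs) t"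
    by (rule match_pt[OF fin gdf(3,4) Cg])
  have "pt {..<n+n} (asg (fs' @ gs')) t' = c"
  proof
    fix i
    show "pt {..<n+n} (asg (fs' @ gs')) t' i = c i"
    proof (cases "i < n + n")
      case True
      show ?thesis
      proof (cases "i < n")
        case True
        then show ?thesis using fun_cong[OF pf, of i] asg_append[OF l(3,4) \<open>i < n+n\<close>] asg_append[OF l(1,2) \<open>i < n+n\<close>]
          by (simp add: c pt_def)
      next
        case False
        then have "i - n < n" using \<open>i < n+n\<close> by simp
        then show ?thesis using False fun_cong[OF pg, of "i - n"] asg_append[OF l(3,4) \<open>i < n+n\<close>]
            asg_append[OF l(1,2) \<open>i < n+n\<close>] \<open>i < n+n\<close>
          by (simp add: c pt_def)
      qed
    qed (simp add: c pt_def)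
  qed
  then show "c \<in> curve {..<n+n} (asg (fs' @ gs'))" by (auto simp: curve_def)
qed

theorem mainTheorem20:
  fixes fs gs fs' gs' :: "('a::{linear_continuum_topology,order_bot,order_top} \<Rightarrow> real) list"
    and n :: nat
  assumes "0 < n"
    and "length fs = n" and "length gs = n" and "length fs' = n" and "length gs' = n"
    and "set fs \<subseteq> M_L" and "set gs \<subseteq> M_L" and "set fs' \<subseteq> M_L" and "set gs' \<subseteq> M_L"
    and "same_tp fs' fs" and "same_tp gs' gs"
    and "same_tp [avg fs', avg gs'] [avg fs, avg gs]"
  shows "same_tp (fs' @ gs') (fs @ gs)"
proof -
  have n1: "n \<ge> 1" using assms(1) by simp
  have "fs ! 0 \<in> M_L" using assms(1,2,6) by (auto intro: nth_mem)
  then have ne: "(M_L::('a \<Rightarrow> real) set) \<noteq> {}" by auto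
  have Cf: "curve {..<n} (asg fs') = curve {..<n} (asg fs)"
    by (rule tp_curve[OF assms(10) assms(8) assms(6) assms(4) n1])
  have Cg: "curve {..<n} (asg gs') = curve {..<n} (asg gs)"
    by (rule tp_curve[OF assms(11) assms(9) assms(7) assms(5) n1])
  have am: "avg fs \<in> M_L" "avg gs \<in> M_L" "avg fs' \<in> M_L" "avg gs' \<in> M_L"
    using avg_ML[OF n1 assms(2,6)] avg_ML[OF n1 assms(3,7)] avg_ML[OF n1 assms(4,8)] avg_ML[OF n1 assms(5,9)]
    by auto
  have Ca: "curve {..<2} (asg [avg fs', avg gs']) = curve {..<2} (asg [avg fs, avg gs])"
    by (rule tp_curve[OF assms(12)]) (use am in auto)
  have C: "curve {..<n+n} (asg (fs' @ gs')) = curve {..<n+n} (asg (fs @ gs))"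
  proof
    show "curve {..<n+n} (asg (fs' @ gs')) \<subseteq> curve {..<n+n} (asg (fs @ gs))"
      by (rule joint_sub[OF n1 assms(4,5,2,3,8,9,6,7) Cf Cg Ca])
    show "curve {..<n+n} (asg (fs @ gs)) \<subseteq> curve {..<n+n} (asg (fs' @ gs'))"
      by (rule joint_sub[OF n1 assms(2,3,4,5,6,7,8,9) Cf[symmetric] Cg[symmetric] Ca[symmetric]])
  qed
  have g1: "good {..<n+n} (asg (fs' @ gs'))" using good_asg[of "fs' @ gs'"] assms(4,5,8,9) by auto
  have g2: "good {..<n+n} (asg (fs @ gs))" using good_asg[of "fs @ gs"] assms(2,3,6,7) by auto
  show ?thesis unfolding same_tp_def
  proof (intro conjI allI impI)
    show "length (fs' @ gs') = length (fs @ gs)" using assms(2-5) by simp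
    fix p assume p: "wf p \<and> fv p \<subseteq> {..<length (fs' @ gs')}"
    then have sub: "fv p \<subseteq> {..<n+n}" using assms(4,5) by simp
    show "eval (asg (fs' @ gs')) p = eval (asg (fs @ gs)) p"
      using eval_curve[OF conjunct1[OF p] ne, rule_format, OF good_mono[OF sub g1] good_mono[OF sub g2]
          curve_restrict[OF sub C]] .
  qed
qed


end
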